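(* Let $(M,F)$ be a Finsler surface written on the region $y^1\neq0$ as $F=|y^1|f(x,u)$, $u=y^2/y^1$, where $f$ is of one of the forms $$f(x,u)=\sqrt{c_3u^2+(c_2c_3-4c_1+1)u+c_2}\;\exp\!\left(\frac{(-c_2c_3+4c_1+1)\operatorname{arctanh}\!\left(\frac{2c_3u+c_2c_3-4c_1+1}{\sqrt{D}}\right)}{\sqrt{D}}\right),\quad D=c_2^2c_3^2-8c_1c_2c_3+16c_1^2-2c_2c_3-8c_1+1,$$ or $$f(x,u)=\sqrt{au^2+bu+1}\;\exp\!\left(-\frac{b}{\sqrt{b^2-4a}}\operatorname{arctanh}\!\left(\frac{2au+b}{\sqrt{b^2-4a}}\right)\right),$$ with $c_1,c_2,c_3,a,b$ functions of $x^1,x^2$. If $(M,F)$ is Landsbergian, then it is Berwaldian.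
   Context: For a Finsler function $F$ with geodesic spray coefficients $G^i=\frac14 g^{il}\big(y^k\frac{\partial^2F^2}{\partial x^k\partial y^l}-\frac{\partial F^2}{\partial x^l}\big)$, $g_{ij}=\dot\partial_i\dot\partial_j(\frac12F^2)$, $\dot\partial_i=\partial/\partial y^i$, the Berwald tensor is $G^h_{ijk}=\dot\partial_i\dot\partial_j\dot\partial_kG^h$ and the Landsberg tensor is $L_{ijk}=-\frac12F\,G^h_{ijk}\dot\partial_hF$. $(M,F)$ is Berwaldian if $G^h_{ijk}\equiv0$ and Landsbergian if $L_{ijk}\equiv0$. *)

theory Defs
  imports "HOL-Analysis.Analysis"
begin

text \<open>Local coordinates on a surface: position x and direction y, both in real^2.
  The two coordinate indices are the elements 1 and 2 of the type 2.
  A function on (part of) the tangent bundle is a map real^2 => real^2 => real.\<close>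

type_synonym tbfun = "real^2 \<Rightarrow> real^2 \<Rightarrow> real"

definition dX :: "2 \<Rightarrow> tbfun \<Rightarrow> tbfun" where
  "dX k H = (\<lambda>x y. deriv (\<lambda>t. H (x + t *\<^sub>R axis k 1) y) 0)"

definition dY :: "2 \<Rightarrow> tbfun \<Rightarrow> tbfun" where
  "dY k H = (\<lambda>x y. deriv (\<lambda>t. H x (y + t *\<^sub>R axis k 1)) 0)"

definition fund :: "tbfun \<Rightarrow> 2 \<Rightarrow> 2 \<Rightarrow> tbfun" where
  "fund F i j = dY i (dY j (\<lambda>x y. (F x y)\<^sup>2 / 2))"

definition fund_inv :: "tbfun \<Rightarrow> 2 \<Rightarrow> 2 \<Rightarrow> tbfun" where
  "fund_inv F i j = (\<lambda>x y. matrix_inv (\<chi> a b. fund F a b x y) $ i $ j)"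

definition spray :: "tbfun \<Rightarrow> 2 \<Rightarrow> tbfun" where
  "spray F h = (\<lambda>x y. (1/4) * (\<Sum>l\<in>UNIV. fund_inv F h l x y *
      ((\<Sum>k\<in>UNIV. y $ k * dX k (dY l (\<lambda>x' y'. (F x' y')\<^sup>2)) x y)
        - dX l (\<lambda>x' y'. (F x' y')\<^sup>2) x y)))"

definition berwald :: "tbfun \<Rightarrow> 2 \<Rightarrow> 2 \<Rightarrow> 2 \<Rightarrow> 2 \<Rightarrow> tbfun" where
  "berwald F h i j k = dY i (dY j (dY k (spray F h)))"

definition landsberg :: "tbfun \<Rightarrow> 2 \<Rightarrow> 2 \<Rightarrow> 2 \<Rightarrow> tbfun" where
  "landsberg F i j k = (\<lambda>x y. - (1/2) * F x y *
      (\<Sum>h\<in>UNIV. berwald F h i j k x y * dY h F x y))"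

definition pd :: "2 \<Rightarrow> (real^2 \<Rightarrow> real) \<Rightarrow> real^2 \<Rightarrow> real" where
  "pd k g = (\<lambda>x. deriv (\<lambda>t. g (x + t *\<^sub>R axis k 1)) 0)"

fun iter_pd :: "2 list \<Rightarrow> (real^2 \<Rightarrow> real) \<Rightarrow> real^2 \<Rightarrow> real" where
  "iter_pd [] g = g"
| "iter_pd (k # ks) g = pd k (iter_pd ks g)"

definition smooth2_on :: "(real^2) set \<Rightarrow> (real^2 \<Rightarrow> real) \<Rightarrow> bool" where
  "smooth2_on U g \<longleftrightarrow> (\<forall>ks. iter_pd ks g differentiable_on U)"

text \<open>First form of f(x,u) (with c1 c2 c3 the values at x)\<close>
definition D1 :: "real \<Rightarrow> real \<Rightarrow> real \<Rightarrow> real" where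
  "D1 c1 c2 c3 = c2\<^sup>2 * c3\<^sup>2 - 8 * c1 * c2 * c3 + 16 * c1\<^sup>2 - 2 * c2 * c3 - 8 * c1 + 1"

definition form1 :: "real \<Rightarrow> real \<Rightarrow> real \<Rightarrow> real \<Rightarrow> real" where
  "form1 c1 c2 c3 u =
     sqrt (c3 * u\<^sup>2 + (c2 * c3 - 4 * c1 + 1) * u + c2) *
     exp ((- c2 * c3 + 4 * c1 + 1) *
          artanh ((2 * c3 * u + c2 * c3 - 4 * c1 + 1) / sqrt (D1 c1 c2 c3))
          / sqrt (D1 c1 c2 c3))"

definition form1_ok :: "real \<Rightarrow> real \<Rightarrow> real \<Rightarrow> real \<Rightarrow> bool" where
  "form1_ok c1 c2 c3 u \<longleftrightarrow>
     c3 * u\<^sup>2 + (c2 * c3 - 4 * c1 + 1) * u + c2 > 0 \<and> D1 c1 c2 c3 > 0 \<and>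
     \<bar>(2 * c3 * u + c2 * c3 - 4 * c1 + 1) / sqrt (D1 c1 c2 c3)\<bar> < 1"

definition form2 :: "real \<Rightarrow> real \<Rightarrow> real \<Rightarrow> real" where
  "form2 a b u =
     sqrt (a * u\<^sup>2 + b * u + 1) *
     exp (- (b / sqrt (b\<^sup>2 - 4 * a)) * artanh ((2 * a * u + b) / sqrt (b\<^sup>2 - 4 * a)))"

definition form2_ok :: "real \<Rightarrow> real \<Rightarrow> real \<Rightarrow> bool" where
  "form2_ok a b u \<longleftrightarrow>
     a * u\<^sup>2 + b * u + 1 > 0 \<and> b\<^sup>2 - 4 * a > 0 \<and>
     \<bar>(2 * a * u + b) / sqrt (b\<^sup>2 - 4 * a)\<bar> < 1"

end

theory Submission
  imports Defs
begin

lemma inner2: "(u::real^2) \<bullet> v = u$1 * v$1 + u$2 * v$2"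
  by (simp add: inner_vec_def sum_2)

lemma inner_axis_add: "(u::real^2) \<bullet> (y + t *\<^sub>R axis k 1) = u \<bullet> y + t * u$k"
  by (simp add: inner_add_right inner_axis)

lemma ev_line_in:
  fixes N :: "((real^2) \<times> (real^2)) set"
  assumes "open N" "(x,y) \<in> N"
  shows "eventually (\<lambda>t::real. (x, y + t *\<^sub>R e) \<in> N) (nhds 0)"
    "eventually (\<lambda>t::real. (x + t *\<^sub>R e, y) \<in> N) (nhds 0)"
proof -
  have c1: "continuous (at t) (\<lambda>t::real. (x, y + t *\<^sub>R e))" for t
    by (intro continuous_intros)
  have c2: "continuous (at t) (\<lambda>t::real. (x + t *\<^sub>R e, y))" for t
    by (intro continuous_intros)
  have o1: "open ((\<lambda>t::real. (x, y + t *\<^sub>R e)) -` N)"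
    by (rule continuous_open_vimage[OF assms(1) c1])
  have o2: "open ((\<lambda>t::real. (x + t *\<^sub>R e, y)) -` N)"
    by (rule continuous_open_vimage[OF assms(1) c2])
  show "eventually (\<lambda>t::real. (x, y + t *\<^sub>R e) \<in> N) (nhds 0)"
    using eventually_nhds_in_open[OF o1] assms(2) by simp
  show "eventually (\<lambda>t::real. (x + t *\<^sub>R e, y) \<in> N) (nhds 0)"
    using eventually_nhds_in_open[OF o2] assms(2) by simp
qed

lemma dY_local:
  assumes "open N" "(x,y) \<in> N" "\<And>x' y'. (x',y') \<in> N \<Longrightarrow> H x' y' = K x' y'"
  shows "dY k H x y = dY k K x y"
  unfolding dY_def
  by (rule deriv_cong_ev[OF eventually_mono[OF ev_line_in(1)[OF assms(1,2), of "axis k 1"]]]) (auto simp: assms(3))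

lemma dX_local:
  assumes "open N" "(x,y) \<in> N" "\<And>x' y'. (x',y') \<in> N \<Longrightarrow> H x' y' = K x' y'"
  shows "dX k H x y = dX k K x y"
  unfolding dX_def
  by (rule deriv_cong_ev[OF eventually_mono[OF ev_line_in(2)[OF assms(1,2), of "axis k 1"]]]) (auto simp: assms(3))

lemma dY_local_all:
  assumes "open N" "\<And>x' y'. (x',y') \<in> N \<Longrightarrow> H x' y' = K x' y'"
  shows "\<And>x' y'. (x',y') \<in> N \<Longrightarrow> dY k H x' y' = dY k K x' y'"
  by (rule dY_local[OF assms(1)]) (auto simp: assms(2))

lemma dY_eq: "((\<lambda>t. H x (y + t *\<^sub>R axis k 1)) has_real_derivative D) (at 0) \<Longrightarrow> dY k H x y = D"
  unfolding dY_def by (rule DERIV_imp_deriv)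

lemma dX_eq: "((\<lambda>t. H (x + t *\<^sub>R axis k 1) y) has_real_derivative D) (at 0) \<Longrightarrow> dX k H x y = D"
  unfolding dX_def by (rule DERIV_imp_deriv)

definition Lam :: "(real^2\<Rightarrow>real) \<Rightarrow> (real^2\<Rightarrow>real) \<Rightarrow> (real^2\<Rightarrow>real^2) \<Rightarrow> (real^2\<Rightarrow>real^2) \<Rightarrow> tbfun" where
  "Lam g a t1 t2 x y = g x + 2 * a x * ln (t1 x \<bullet> y) + 2 * (1 - a x) * ln (t2 x \<bullet> y)"

definition hh :: "(real^2\<Rightarrow>real) \<Rightarrow> (real^2\<Rightarrow>real^2) \<Rightarrow> (real^2\<Rightarrow>real^2) \<Rightarrow> 2 \<Rightarrow> tbfun" where
  "hh a t1 t2 l x y = 2 * a x * (t1 x $ l) / (t1 x \<bullet> y) + 2 * (1 - a x) * (t2 x $ l) / (t2 x \<bullet> y)"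

lemma dLam_y:
  assumes X: "t1 x \<bullet> y > 0" and Y: "t2 x \<bullet> y > 0"
  shows "((\<lambda>t. exp (Lam g a t1 t2 x (y + t *\<^sub>R axis l 1))) has_real_derivative
          exp (Lam g a t1 t2 x y) * hh a t1 t2 l x y) (at 0)"
  unfolding Lam_def inner_axis_add hh_def
  using X Y
  by (auto intro!: derivative_eq_intros simp: field_simps)

lemma dhh_y:
  assumes X: "t1 x \<bullet> y > 0" and Y: "t2 x \<bullet> y > 0"
  shows "((\<lambda>t. exp (Lam g a t1 t2 x (y + t *\<^sub>R axis i 1)) * hh a t1 t2 j x (y + t *\<^sub>R axis i 1)) has_real_derivative
          exp (Lam g a t1 t2 x y) * (hh a t1 t2 i x y * hh a t1 t2 j x y
            - 2 * a x * (t1 x $ i) * (t1 x $ j) / (t1 x \<bullet> y)^2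
            - 2 * (1 - a x) * (t2 x $ i) * (t2 x $ j) / (t2 x \<bullet> y)^2)) (at 0)"
  unfolding Lam_def inner_axis_add hh_def
  using X Y
  by (auto intro!: derivative_eq_intros simp: field_simps power2_eq_square)

lemma dLam_x:
  assumes X: "t1 x \<bullet> y > 0" and Y: "t2 x \<bullet> y > 0"
    and dg: "((\<lambda>t. g (x + t *\<^sub>R e)) has_real_derivative g') (at 0)"
    and da: "((\<lambda>t. a (x + t *\<^sub>R e)) has_real_derivative a') (at 0)"
    and dX: "((\<lambda>t. t1 (x + t *\<^sub>R e) \<bullet> y) has_real_derivative X') (at 0)"
    and dY: "((\<lambda>t. t2 (x + t *\<^sub>R e) \<bullet> y) has_real_derivative Y') (at 0)"
  shows "((\<lambda>t. exp (Lam g a t1 t2 (x + t *\<^sub>R e) y)) has_real_derivative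
          exp (Lam g a t1 t2 x y) * (g' + 2 * a' * (ln (t1 x \<bullet> y) - ln (t2 x \<bullet> y))
            + 2 * a x * X' / (t1 x \<bullet> y) + 2 * (1 - a x) * Y' / (t2 x \<bullet> y))) (at 0)"
  unfolding Lam_def
  using X Y
  by (auto intro!: derivative_eq_intros dg da dX dY simp: field_simps)

lemma dhh_x:
  assumes X: "t1 x \<bullet> y > 0" and Y: "t2 x \<bullet> y > 0"
    and dg: "((\<lambda>t. g (x + t *\<^sub>R e)) has_real_derivative g') (at 0)"
    and da: "((\<lambda>t. a (x + t *\<^sub>R e)) has_real_derivative a') (at 0)"
    and dX: "((\<lambda>t. t1 (x + t *\<^sub>R e) \<bullet> y) has_real_derivative X') (at 0)"
    and dY: "((\<lambda>t. t2 (x + t *\<^sub>R e) \<bullet> y) has_real_derivative Y') (at 0)"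
    and dm: "((\<lambda>t. t1 (x + t *\<^sub>R e) $ l) has_real_derivative m') (at 0)"
    and dn: "((\<lambda>t. t2 (x + t *\<^sub>R e) $ l) has_real_derivative n') (at 0)"
  shows "((\<lambda>t. exp (Lam g a t1 t2 (x + t *\<^sub>R e) y) * hh a t1 t2 l (x + t *\<^sub>R e) y) has_real_derivative
          exp (Lam g a t1 t2 x y) * ((g' + 2 * a' * (ln (t1 x \<bullet> y) - ln (t2 x \<bullet> y))
            + 2 * a x * X' / (t1 x \<bullet> y) + 2 * (1 - a x) * Y' / (t2 x \<bullet> y)) * hh a t1 t2 l x y
            + (2 * a' * (t1 x $ l) / (t1 x \<bullet> y) + 2 * a x * m' / (t1 x \<bullet> y)
               - 2 * a x * (t1 x $ l) * X' / (t1 x \<bullet> y)^2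
               - 2 * a' * (t2 x $ l) / (t2 x \<bullet> y) + 2 * (1 - a x) * n' / (t2 x \<bullet> y)
               - 2 * (1 - a x) * (t2 x $ l) * Y' / (t2 x \<bullet> y)^2))) (at 0)"
  unfolding Lam_def hh_def
  using X Y
  by (auto intro!: derivative_eq_intros dg da dX dY dm dn simp: field_simps power2_eq_square)

locale core =
  fixes F :: tbfun and g a :: "real^2 \<Rightarrow> real" and t1 t2 :: "real^2 \<Rightarrow> real^2"
    and N :: "((real^2) \<times> (real^2)) set" and x0 :: "real^2"
  assumes N_open: "open N"
    and N_pos: "\<And>x y. (x,y) \<in> N \<Longrightarrow> t1 x \<bullet> y > 0 \<and> t2 x \<bullet> y > 0"
    and N_F: "\<And>x y. (x,y) \<in> N \<Longrightarrow> F x y = exp (Lam g a t1 t2 x y / 2)"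
    and dg: "\<And>k. (\<lambda>t. g (x0 + t *\<^sub>R axis k 1)) differentiable (at 0)"
    and da: "\<And>k. (\<lambda>t. a (x0 + t *\<^sub>R axis k 1)) differentiable (at 0)"
    and dt1: "\<And>k m. (\<lambda>t. t1 (x0 + t *\<^sub>R axis k 1) $ m) differentiable (at 0)"
    and dt2: "\<And>k m. (\<lambda>t. t2 (x0 + t *\<^sub>R axis k 1) $ m) differentiable (at 0)"
    and finsler: "\<And>y v. (x0,y) \<in> N \<Longrightarrow> v \<noteq> 0 \<Longrightarrow> v \<bullet> ((\<chi> i j. fund F i j x0 y) *v v) > 0"
    and lands: "\<And>y i j k. (x0,y) \<in> N \<Longrightarrow> landsberg F i j k x0 y = 0"
begin

abbreviation "E \<equiv> (\<lambda>x y. exp (Lam g a t1 t2 x y))"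
abbreviation "H \<equiv> hh a t1 t2"

definition "gk k = deriv (\<lambda>t. g (x0 + t *\<^sub>R axis k 1)) 0"
definition "ak k = deriv (\<lambda>t. a (x0 + t *\<^sub>R axis k 1)) 0"
definition "T1 k = (\<chi> m. deriv (\<lambda>t. t1 (x0 + t *\<^sub>R axis k 1) $ m) 0)"
definition "T2 k = (\<chi> m. deriv (\<lambda>t. t2 (x0 + t *\<^sub>R axis k 1) $ m) 0)"

lemma Dg: "((\<lambda>t. g (x0 + t *\<^sub>R axis k 1)) has_real_derivative gk k) (at 0)"
  unfolding gk_def using dg DERIV_deriv_iff_real_differentiable by blast
lemma Da: "((\<lambda>t. a (x0 + t *\<^sub>R axis k 1)) has_real_derivative ak k) (at 0)"
  unfolding ak_def using da DERIV_deriv_iff_real_differentiable by blast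
lemma Dt1: "((\<lambda>t. t1 (x0 + t *\<^sub>R axis k 1) $ m) has_real_derivative T1 k $ m) (at 0)"
  unfolding T1_def using dt1 DERIV_deriv_iff_real_differentiable by simp
lemma Dt2: "((\<lambda>t. t2 (x0 + t *\<^sub>R axis k 1) $ m) has_real_derivative T2 k $ m) (at 0)"
  unfolding T2_def using dt2 DERIV_deriv_iff_real_differentiable by simp
lemma DX1: "((\<lambda>t. t1 (x0 + t *\<^sub>R axis k 1) \<bullet> y) has_real_derivative T1 k \<bullet> y) (at 0)"
  unfolding inner2 by (auto intro!: derivative_eq_intros Dt1)
lemma DX2: "((\<lambda>t. t2 (x0 + t *\<^sub>R axis k 1) \<bullet> y) has_real_derivative T2 k \<bullet> y) (at 0)"
  unfolding inner2 by (auto intro!: derivative_eq_intros Dt2)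

lemma F2: "(x,y) \<in> N \<Longrightarrow> (F x y)^2 = E x y"
  using N_F[of x y] by (simp add: power2_eq_square exp_add[symmetric])

lemma dYF2: "(x,y) \<in> N \<Longrightarrow> dY l (\<lambda>x y. (F x y)^2) x y = E x y * H l x y"
proof -
  assume xy: "(x,y) \<in> N"
  have "dY l (\<lambda>x y. (F x y)^2) x y = dY l E x y"
    by (rule dY_local[OF N_open xy]) (simp add: F2)
  also have "\<dots> = E x y * H l x y"
    by (rule dY_eq, rule dLam_y) (use N_pos[OF xy] in auto)
  finally show ?thesis .
qed

lemma dYF2h: "(x,y) \<in> N \<Longrightarrow> dY l (\<lambda>x y. (F x y)^2 / 2) x y = E x y * H l x y / 2"
proof -
  assume xy: "(x,y) \<in> N"
  have "dY l (\<lambda>x y. (F x y)^2 / 2) x y = dY l (\<lambda>x y. E x y / 2) x y"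
    by (rule dY_local[OF N_open xy]) (simp add: F2)
  also have "\<dots> = E x y * H l x y / 2"
    by (rule dY_eq, rule DERIV_cdivide, rule dLam_y) (use N_pos[OF xy] in auto)
  finally show ?thesis .
qed

definition "gmat x y i j = E x y * (H i x y * H j x y
            - 2 * a x * (t1 x $ i) * (t1 x $ j) / (t1 x \<bullet> y)^2
            - 2 * (1 - a x) * (t2 x $ i) * (t2 x $ j) / (t2 x \<bullet> y)^2) / 2"

lemma fund_eq: "(x,y) \<in> N \<Longrightarrow> fund F i j x y = gmat x y i j"
proof -
  assume xy: "(x,y) \<in> N"
  have "fund F i j x y = dY i (\<lambda>x y. E x y * H j x y / 2) x y"
    unfolding fund_def by (rule dY_local[OF N_open xy]) (simp add: dYF2h)
  also have "\<dots> = gmat x y i j"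
    unfolding gmat_def
    by (rule dY_eq, rule DERIV_cdivide, rule dhh_y) (use N_pos[OF xy] in auto)
  finally show ?thesis .
qed

definition "Lk y k = gk k + 2 * ak k * (ln (t1 x0 \<bullet> y) - ln (t2 x0 \<bullet> y))
            + 2 * a x0 * (T1 k \<bullet> y) / (t1 x0 \<bullet> y) + 2 * (1 - a x0) * (T2 k \<bullet> y) / (t2 x0 \<bullet> y)"

definition "dh y k l = 2 * ak k * (t1 x0 $ l) / (t1 x0 \<bullet> y) + 2 * a x0 * (T1 k $ l) / (t1 x0 \<bullet> y)
               - 2 * a x0 * (t1 x0 $ l) * (T1 k \<bullet> y) / (t1 x0 \<bullet> y)^2
               - 2 * ak k * (t2 x0 $ l) / (t2 x0 \<bullet> y) + 2 * (1 - a x0) * (T2 k $ l) / (t2 x0 \<bullet> y)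
               - 2 * (1 - a x0) * (t2 x0 $ l) * (T2 k \<bullet> y) / (t2 x0 \<bullet> y)^2"

lemma dXF2: "(x0,y) \<in> N \<Longrightarrow> dX l (\<lambda>x y. (F x y)^2) x0 y = E x0 y * Lk y l"
proof -
  assume xy: "(x0,y) \<in> N"
  have "dX l (\<lambda>x y. (F x y)^2) x0 y = dX l E x0 y"
    by (rule dX_local[OF N_open xy]) (simp add: F2)
  also have "\<dots> = E x0 y * Lk y l"
    unfolding Lk_def
    by (rule dX_eq, rule dLam_x[OF _ _ Dg Da DX1 DX2]) (use N_pos[OF xy] in auto)
  finally show ?thesis .
qed

lemma dXdYF2: "(x0,y) \<in> N \<Longrightarrow> dX k (dY l (\<lambda>x y. (F x y)^2)) x0 y = E x0 y * (Lk y k * H l x0 y + dh y k l)"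
proof -
  assume xy: "(x0,y) \<in> N"
  have "dX k (dY l (\<lambda>x y. (F x y)^2)) x0 y = dX k (\<lambda>x y. E x y * H l x y) x0 y"
    by (rule dX_local[OF N_open xy]) (simp add: dYF2)
  also have "\<dots> = E x0 y * (Lk y k * H l x0 y + dh y k l)"
    unfolding Lk_def dh_def
    by (rule dX_eq, rule dhh_x[OF _ _ Dg Da DX1 DX2 Dt1 Dt2]) (use N_pos[OF xy] in auto)
  finally show ?thesis .
qed

end

lemma alg0:
  fixes X Y a b L al1 al2 G1 G2 a1 a2 t1 t2 w1 w2 C1 C2 :: real
  assumes X: "X \<noteq> 0" and Y: "Y \<noteq> 0" and a: "a \<noteq> 0" and b: "b \<noteq> 0" and ab: "a + b = 1"
  shows "(1/2)*((2*a*w1/X+2*b*w2/Y)*(2*a*(al1/2 + X^2*(G1/2+b*t2)/(2*a) + t1*X*Y/2 + a1*X^2*L/(2*a) - X*(X*a1+Y*a2)/(2*a))/X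
      + 2*b*(al2/2 - t2*X*Y/2 - (a*t1-G2/2)*Y^2/(2*b) + a2*Y^2*L/(2*b) + Y*(X*a1+Y*a2)/(2*b))/Y)
      - 2*a*w1*(al1/2 + X^2*(G1/2+b*t2)/(2*a) + t1*X*Y/2 + a1*X^2*L/(2*a) - X*(X*a1+Y*a2)/(2*a))/X^2
      - 2*b*w2*(al2/2 - t2*X*Y/2 - (a*t1-G2/2)*Y^2/(2*b) + a2*Y^2*L/(2*b) + Y*(X*a1+Y*a2)/(2*b))/Y^2)
    = (1/4)*((X*G1+Y*G2 + 2*(X*a1+Y*a2)*L + 2*a*al1/X + 2*b*al2/Y)*(2*a*w1/X+2*b*w2/Y)
      + (2*(X*a1+Y*a2)*w1/X + 2*a*(C1 + (X*w2-Y*w1)*t1)/X - 2*a*w1*al1/X^2 - 2*(X*a1+Y*a2)*w2/Y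
         + 2*b*(C2 + (X*w2-Y*w1)*t2)/Y - 2*b*w2*al2/Y^2)
      - (w1*G1+w2*G2 + 2*(w1*a1+w2*a2)*L + 2*a*C1/X + 2*b*C2/Y))"
proof -
  have bb: "b = 1 - a" using ab by simp
  show ?thesis
  using X Y a b
  apply (simp add: field_simps)
  unfolding bb
  apply algebra
  done
qed

lemma two_ne: "(1::2) \<noteq> 2" by simp

lemma lin_frame_raw0:
  fixes m1 m2 n1 n2 c1 c2 w1 w2 d :: real
  assumes "d \<noteq> 0" "d = m1 * n2 - m2 * n1"
  shows "c1 * w1 + c2 * w2 = (m1 * w1 + m2 * w2) * (c1 * (n2 / d) + c2 * (- n1 / d))
        + (n1 * w1 + n2 * w2) * (c1 * (- m2 / d) + c2 * (m1 / d))"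
proof -
  have h: "(m1*w1+m2*w2)*(c1*n2 - c2*n1) + (n1*w1+n2*w2)*(c2*m1 - c1*m2) = d*(c1*w1+c2*w2)"
    unfolding assms(2) by algebra
  have "(m1 * w1 + m2 * w2) * (c1 * (n2 / d) + c2 * (- n1 / d))
        + (n1 * w1 + n2 * w2) * (c1 * (- m2 / d) + c2 * (m1 / d))
      = ((m1*w1+m2*w2)*(c1*n2 - c2*n1) + (n1*w1+n2*w2)*(c2*m1 - c1*m2)) / d"
    using assms(1) by (simp add: field_simps)
  also have "\<dots> = c1*w1+c2*w2" using h assms(1) by simp
  finally show ?thesis by simp
qed

lemma lin_frame_raw:
  fixes m1 m2 n1 n2 c1 c2 w1 w2 :: real
  assumes "m1 * n2 - m2 * n1 \<noteq> 0"
  shows "c1 * w1 + c2 * w2 = (m1 * w1 + m2 * w2) * (c1 * (n2 / (m1 * n2 - m2 * n1)) + c2 * (- n1 / (m1 * n2 - m2 * n1)))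
        + (n1 * w1 + n2 * w2) * (c1 * (- m2 / (m1 * n2 - m2 * n1)) + c2 * (m1 / (m1 * n2 - m2 * n1)))"
  using lin_frame_raw0[OF assms refl] .

lemma bil_frame_raw:
  fixes ma mb na nb ua ub pa pb baa bab bba bbb d :: real
  assumes d0: "d \<noteq> 0" and d: "d = ma * nb - mb * na"
  defines "B \<equiv> (\<lambda>ua ub pa pb. ua * (baa * pa + bab * pb) + ub * (bba * pa + bbb * pb))"
  shows "B ua ub pa pb - B pa pb ua ub = ((ma*ua+mb*ub)*(na*pa+nb*pb) - (na*ua+nb*ub)*(ma*pa+mb*pb))
            * (B (nb/d) (-na/d) (-mb/d) (ma/d) - B (-mb/d) (ma/d) (nb/d) (-na/d))"
proof -
  have s1: "\<And>ua ub pa pb. B ua ub pa pb - B pa pb ua ub = (bab-bba)*(ua*pb - ub*pa)"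
    unfolding B_def by algebra
  have e: "nb*ma - na*mb = d" unfolding d by algebra
  have "(nb/d)*(ma/d) - (-na/d)*(-mb/d) = (nb*ma - na*mb)/(d*d)"
    using d0 by (simp add: field_simps)
  then have s2: "(nb/d)*(ma/d) - (-na/d)*(-mb/d) = 1/d"
    using d0 by (simp add: e)
  have s4: "(ma*ua+mb*ub)*(na*pa+nb*pb) - (na*ua+nb*ub)*(ma*pa+mb*pb) = d*(ua*pb - ub*pa)"
    unfolding d by algebra
  show ?thesis unfolding s1 s4 s2 using d0 by simp
qed

context core begin

abbreviation "mu \<equiv> t1 x0"
abbreviation "nu \<equiv> t2 x0"
abbreviation "A \<equiv> a x0"
definition "dtm = mu$1 * nu$2 - mu$2 * nu$1"
definition "e1 = (\<chi> (m::2). if m = 1 then nu$2/dtm else - nu$1/dtm)"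
definition "e2 = (\<chi> (m::2). if m = 1 then - mu$2/dtm else mu$1/dtm)"
definition "Bil1 u v = u$1 * (T1 1 \<bullet> v) + u$2 * (T1 2 \<bullet> v)"
definition "Bil2 u v = u$1 * (T2 1 \<bullet> v) + u$2 * (T2 2 \<bullet> v)"
definition "Gf v = v$1 * gk 1 + v$2 * gk 2"
definition "Af v = v$1 * ak 1 + v$2 * ak 2"
definition "tau1 = Bil1 e1 e2 - Bil1 e2 e1"
definition "tau2 = Bil2 e1 e2 - Bil2 e2 e1"

lemma e1_1: "e1$1 = nu$2/dtm" and e1_2: "e1$2 = - nu$1/dtm"
  and e2_1: "e2$1 = - mu$2/dtm" and e2_2: "e2$2 = mu$1/dtm"
  by (simp_all add: e1_def e2_def)

lemma frame_inner:
  assumes "dtm \<noteq> 0"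
  shows "mu \<bullet> e1 = 1" "nu \<bullet> e1 = 0" "mu \<bullet> e2 = 0" "nu \<bullet> e2 = 1"
proof -
  have d: "dtm = mu$1 * nu$2 - mu$2 * nu$1" by (simp add: dtm_def)
  show "mu \<bullet> e1 = 1" using assms unfolding inner2 e1_1 e1_2
    by (simp add: field_simps) (simp add: d)
  show "nu \<bullet> e1 = 0" using assms unfolding inner2 e1_1 e1_2
    by (simp add: field_simps)
  show "mu \<bullet> e2 = 0" using assms unfolding inner2 e2_1 e2_2
    by (simp add: field_simps)
  show "nu \<bullet> e2 = 1" using assms unfolding inner2 e2_1 e2_2
    by (simp add: field_simps) (simp add: d)
qed

lemma lin_frame:
  assumes "dtm \<noteq> 0"
  shows "c1 * w$1 + c2 * w$2 = (mu \<bullet> w) * (c1 * e1$1 + c2 * e1$2) + (nu \<bullet> w) * (c1 * e2$1 + c2 * e2$2)"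
  unfolding inner2 e1_1 e1_2 e2_1 e2_2 dtm_def
  by (rule lin_frame_raw) (use assms in \<open>simp add: dtm_def\<close>)

lemma Gf_frame: "dtm \<noteq> 0 \<Longrightarrow> Gf w = (mu \<bullet> w) * Gf e1 + (nu \<bullet> w) * Gf e2"
  unfolding Gf_def using lin_frame[of "gk 1" w "gk 2"] by (simp add: algebra_simps)
lemma Af_frame: "dtm \<noteq> 0 \<Longrightarrow> Af w = (mu \<bullet> w) * Af e1 + (nu \<bullet> w) * Af e2"
  unfolding Af_def using lin_frame[of "ak 1" w "ak 2"] by (simp add: algebra_simps)

lemma Bil1_frame:
  assumes "dtm \<noteq> 0"
  shows "Bil1 u v - Bil1 v u = ((mu \<bullet> u) * (nu \<bullet> v) - (nu \<bullet> u) * (mu \<bullet> v)) * tau1"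
  unfolding tau1_def Bil1_def inner2 e1_1 e1_2 e2_1 e2_2
  using bil_frame_raw[OF assms dtm_def, where
      baa="T1 1$1" and bab="T1 1$2" and bba="T1 2$1" and bbb="T1 2$2"
      and ua="u$1" and ub="u$2" and pa="v$1" and pb="v$2"]
    by (simp add: algebra_simps)
lemma Bil2_frame:
  assumes "dtm \<noteq> 0"
  shows "Bil2 u v - Bil2 v u = ((mu \<bullet> u) * (nu \<bullet> v) - (nu \<bullet> u) * (mu \<bullet> v)) * tau2"
  unfolding tau2_def Bil2_def inner2 e1_1 e1_2 e2_1 e2_2
  using bil_frame_raw[OF assms dtm_def, where
      baa="T2 1$1" and bab="T2 1$2" and bba="T2 2$1" and bbb="T2 2$2"
      and ua="u$1" and ub="u$2" and pa="v$1" and pb="v$2"]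
    by (simp add: algebra_simps)

end

context core begin

definition "LL y = ln (mu \<bullet> y) - ln (nu \<bullet> y)"
definition "PP y = Bil1 y y/2 + (mu \<bullet> y)^2*(Gf e1/2+(1-A)*tau2)/(2*A) + tau1*(mu \<bullet> y)*(nu \<bullet> y)/2
   + Af e1*(mu \<bullet> y)^2*LL y/(2*A) - (mu \<bullet> y)*((mu \<bullet> y)*Af e1+(nu \<bullet> y)*Af e2)/(2*A)"
definition "QQ y = Bil2 y y/2 - tau2*(mu \<bullet> y)*(nu \<bullet> y)/2 - (A*tau1-Gf e2/2)*(nu \<bullet> y)^2/(2*(1-A))
   + Af e2*(nu \<bullet> y)^2*LL y/(2*(1-A)) + (nu \<bullet> y)*((mu \<bullet> y)*Af e1+(nu \<bullet> y)*Af e2)/(2*(1-A))"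
definition "SS y = PP y *\<^sub>R e1 + QQ y *\<^sub>R e2"

lemma SS_inner: "dtm \<noteq> 0 \<Longrightarrow> mu \<bullet> SS y = PP y \<and> nu \<bullet> SS y = QQ y"
  using frame_inner by (simp add: SS_def inner_add_right)

lemma axis_facts:
  "Gf (axis l 1) = gk l" "Af (axis l 1) = ak l" "Bil1 (axis l 1) y = T1 l \<bullet> y" "Bil2 (axis l 1) y = T2 l \<bullet> y"
  "(u::real^2) \<bullet> axis l 1 = u $ l"
  using exhaust_2[of l] by (auto simp: Gf_def Af_def Bil1_def Bil2_def axis_def inner2)

lemma gmat_sum:
  assumes "(x0,y) \<in> N"
  shows "(\<Sum>h\<in>UNIV. gmat x0 y l h * s $ h) = E x0 y * ((1/2)*((2*A*(mu$l)/(mu \<bullet> y)+2*(1-A)*(nu$l)/(nu \<bullet> y))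
      *(2*A*(mu \<bullet> s)/(mu \<bullet> y) + 2*(1-A)*(nu \<bullet> s)/(nu \<bullet> y))
      - 2*A*(mu$l)*(mu \<bullet> s)/(mu \<bullet> y)^2 - 2*(1-A)*(nu$l)*(nu \<bullet> s)/(nu \<bullet> y)^2))"
proof -
  have X: "mu \<bullet> y \<noteq> 0" and Y: "nu \<bullet> y \<noteq> 0" using N_pos[OF assms] by auto
  show ?thesis unfolding gmat_def hh_def sum_2 inner2[of mu s] inner2[of nu s] using X Y
    by (simp add: field_simps power2_eq_square)
qed

lemma rhs_raw:
  assumes "(x0,y) \<in> N"
  shows "y$1*(Lk y 1*H l x0 y + dh y 1 l) + y$2*(Lk y 2*H l x0 y + dh y 2 l) - Lk y l =
   (Gf y + 2*Af y*LL y + 2*A*Bil1 y y/(mu \<bullet> y) + 2*(1-A)*Bil2 y y/(nu \<bullet> y))*(2*A*mu$l/(mu \<bullet> y)+2*(1-A)*nu$l/(nu \<bullet> y))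
   + (2*Af y*mu$l/(mu \<bullet> y) + 2*A*(Bil1 y (axis l 1))/(mu \<bullet> y) - 2*A*mu$l*Bil1 y y/(mu \<bullet> y)^2
      - 2*Af y*nu$l/(nu \<bullet> y) + 2*(1-A)*(Bil2 y (axis l 1))/(nu \<bullet> y) - 2*(1-A)*nu$l*Bil2 y y/(nu \<bullet> y)^2)
   - (Gf (axis l 1) + 2*Af (axis l 1)*LL y + 2*A*Bil1 (axis l 1) y/(mu \<bullet> y) + 2*(1-A)*Bil2 (axis l 1) y/(nu \<bullet> y))"
proof -
  have X: "mu \<bullet> y \<noteq> 0" and Y: "nu \<bullet> y \<noteq> 0" using N_pos[OF assms] by auto
  show ?thesis
    unfolding axis_facts
    unfolding Lk_def dh_def hh_def Gf_def Af_def Bil1_def Bil2_def LL_def axis_facts using X Y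
    by (simp add: field_simps power2_eq_square)
qed

lemma spray_id:
  assumes nd: "dtm \<noteq> 0" "A \<noteq> 0" "A \<noteq> 1" and xy: "(x0,y) \<in> N"
  shows "(\<Sum>h\<in>UNIV. gmat x0 y l h * SS y $ h) = (1/4) * ((\<Sum>k\<in>UNIV. y$k * dX k (dY l (\<lambda>x y. (F x y)^2)) x0 y)
      - dX l (\<lambda>x y. (F x y)^2) x0 y)"
proof -
  have X: "mu \<bullet> y \<noteq> 0" and Y: "nu \<bullet> y \<noteq> 0" using N_pos[OF xy] by auto
  have r: "(\<Sum>k\<in>UNIV. y$k * dX k (dY l (\<lambda>x y. (F x y)^2)) x0 y) - dX l (\<lambda>x y. (F x y)^2) x0 y
      = E x0 y * (y$1*(Lk y 1*H l x0 y + dh y 1 l) + y$2*(Lk y 2*H l x0 y + dh y 2 l) - Lk y l)"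
    unfolding sum_2 dXdYF2[OF xy] dXF2[OF xy] by (simp add: algebra_simps)
  have fr: "Gf y = (mu \<bullet> y) * Gf e1 + (nu \<bullet> y) * Gf e2" "Af y = (mu \<bullet> y) * Af e1 + (nu \<bullet> y) * Af e2"
    "Gf (axis l 1) = mu$l * Gf e1 + nu$l * Gf e2" "Af (axis l 1) = mu$l * Af e1 + nu$l * Af e2"
    using Gf_frame[OF nd(1)] Af_frame[OF nd(1)] axis_facts(5) by metis+
  have b1: "Bil1 y (axis l 1) = Bil1 (axis l 1) y + ((mu \<bullet> y) * nu$l - (nu \<bullet> y) * mu$l) * tau1"
    using Bil1_frame[OF nd(1), of y "axis l 1"] axis_facts(5) by (simp add: algebra_simps)
  have b2: "Bil2 y (axis l 1) = Bil2 (axis l 1) y + ((mu \<bullet> y) * nu$l - (nu \<bullet> y) * mu$l) * tau2"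
    using Bil2_frame[OF nd(1), of y "axis l 1"] axis_facts(5) by (simp add: algebra_simps)
  have a0: "(1/2)*((2*A*mu$l/(mu \<bullet> y)+2*(1-A)*nu$l/(nu \<bullet> y))*(2*A*PP y/(mu \<bullet> y) + 2*(1-A)*QQ y/(nu \<bullet> y))
      - 2*A*mu$l*PP y/(mu \<bullet> y)^2 - 2*(1-A)*nu$l*QQ y/(nu \<bullet> y)^2)
    = (1/4)*(y$1*(Lk y 1*H l x0 y + dh y 1 l) + y$2*(Lk y 2*H l x0 y + dh y 2 l) - Lk y l)"
    unfolding rhs_raw[OF xy] fr b1 b2 PP_def QQ_def
    by (rule alg0[where b="1 - A"]) (use X Y nd in auto)
  show ?thesis
    unfolding gmat_sum[OF xy] r using SS_inner[OF nd(1)] a0 by simp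
qed

end

lemma pd_inv:
  fixes M :: "real^'n^'n"
  assumes "\<And>v. v \<noteq> 0 \<Longrightarrow> v \<bullet> (M *v v) > 0"
  shows "matrix_inv M ** M = mat 1"
proof -
  have "\<forall>x. M *v x = 0 \<longrightarrow> x = 0"
    using assms by force
  then have "invertible M"
    using invertible_left_inverse matrix_left_invertible_ker by blast
  then have "\<exists>A'. M ** A' = mat 1 \<and> A' ** M = mat 1" unfolding invertible_def .
  then have "M ** matrix_inv M = mat 1 \<and> matrix_inv M ** M = mat 1"
    unfolding matrix_inv_def by (rule someI_ex)
  then show ?thesis by simp
qed

context core begin

lemma spray_SS:
  assumes nd: "dtm \<noteq> 0" "A \<noteq> 0" "A \<noteq> 1" and xy: "(x0,y) \<in> N"
  shows "spray F h x0 y = SS y $ h"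
proof -
  define M where "M = (\<chi> i j. fund F i j x0 y)"
  define R where "R = (\<chi> l. (\<Sum>k\<in>UNIV. y$k * dX k (dY l (\<lambda>x y. (F x y)^2)) x0 y)
      - dX l (\<lambda>x y. (F x y)^2) x0 y)"
  have inv: "matrix_inv M ** M = mat 1"
    by (rule pd_inv) (use finsler[OF xy] in \<open>simp add: M_def\<close>)
  have MS: "M *v SS y = (1/4) *\<^sub>R R"
    unfolding vec_eq_iff
  proof
    fix l
    have "(M *v SS y) $ l = (\<Sum>h\<in>UNIV. gmat x0 y l h * SS y $ h)"
      by (simp add: M_def matrix_vector_mult_def fund_eq[OF xy])
    also have "\<dots> = ((1/4) *\<^sub>R R) $ l"
      unfolding spray_id[OF nd xy] by (simp add: R_def)
    finally show "(M *v SS y) $ l = ((1/4) *\<^sub>R R) $ l" .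
  qed
  have "matrix_inv M *v R = matrix_inv M *v (4 *\<^sub>R (M *v SS y))"
    using MS by simp
  also have "\<dots> = 4 *\<^sub>R SS y"
    by (simp add: matrix_vector_mult_scaleR matrix_vector_mul_assoc inv)
  finally have iR: "matrix_inv M *v R = 4 *\<^sub>R SS y" .
  have "spray F h x0 y = (1/4) * (matrix_inv M *v R) $ h"
    unfolding spray_def fund_inv_def M_def R_def matrix_vector_mult_def by simp
  then show ?thesis using iR by simp
qed

end

context core begin

lemma vMv:
  assumes xy: "(x0,y) \<in> N"
  shows "v \<bullet> ((\<chi> i j. fund F i j x0 y) *v v) = E x0 y * ((1/2)*((2*A*(mu \<bullet> v)/(mu \<bullet> y) + 2*(1-A)*(nu \<bullet> v)/(nu \<bullet> y))^2
      - 2*A*(mu \<bullet> v)^2/(mu \<bullet> y)^2 - 2*(1-A)*(nu \<bullet> v)^2/(nu \<bullet> y)^2))"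
proof -
  have c: "((\<chi> i j. fund F i j x0 y) *v v) $ l = E x0 y * ((1/2)*((2*A*(mu$l)/(mu \<bullet> y)+2*(1-A)*(nu$l)/(nu \<bullet> y))
      *(2*A*(mu \<bullet> v)/(mu \<bullet> y) + 2*(1-A)*(nu \<bullet> v)/(nu \<bullet> y))
      - 2*A*(mu$l)*(mu \<bullet> v)/(mu \<bullet> y)^2 - 2*(1-A)*(nu$l)*(nu \<bullet> v)/(nu \<bullet> y)^2))" for l
    unfolding gmat_sum[OF xy, symmetric] by (simp add: matrix_vector_mult_def fund_eq[OF xy])
  have X: "mu \<bullet> y \<noteq> 0" and Y: "nu \<bullet> y \<noteq> 0" using N_pos[OF xy] by auto
  show ?thesis
    unfolding inner2[of v] c unfolding inner2[of mu v] inner2[of nu v]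
    using X Y by (simp add: field_simps power2_eq_square)
qed

lemma nondeg:
  assumes xy: "(x0,y) \<in> N"
  shows "dtm \<noteq> 0 \<and> A \<noteq> 0 \<and> A \<noteq> 1"
proof -
  have X: "mu \<bullet> y > 0" and Y: "nu \<bullet> y > 0" using N_pos[OF xy] by auto
  have mu0: "mu \<noteq> 0" using X by auto
  have nu0: "nu \<noteq> 0" using Y by auto
  define vm where "vm = (\<chi> (m::2). if m = 1 then mu$2 else - mu$1)"
  define vn where "vn = (\<chi> (m::2). if m = 1 then nu$2 else - nu$1)"
  have vm0: "vm \<noteq> 0"
  proof
    assume "vm = 0"
    then have "vm$1 = 0" "vm$2 = 0" by simp_all
    then have "mu$1 = 0" "mu$2 = 0" unfolding vm_def by simp_all
    then have "mu = 0" by (simp add: vec_eq_iff forall_2)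
    then show False using mu0 by simp
  qed
  have vn0: "vn \<noteq> 0"
  proof
    assume "vn = 0"
    then have "vn$1 = 0" "vn$2 = 0" by simp_all
    then have "nu$1 = 0" "nu$2 = 0" unfolding vn_def by simp_all
    then have "nu = 0" by (simp add: vec_eq_iff forall_2)
    then show False using nu0 by simp
  qed
  have pm: "mu \<bullet> vm = 0" and qn: "nu \<bullet> vn = 0" and qm: "nu \<bullet> vm = - dtm"
    by (simp_all add: vm_def vn_def inner2 dtm_def algebra_simps)
  show ?thesis
  proof (intro conjI notI)
    assume "dtm = 0"
    then have "vm \<bullet> ((\<chi> i j. fund F i j x0 y) *v vm) = 0" using vMv[OF xy, of vm] pm qm by simp
    then show False using finsler[OF xy vm0] by simp
  next
    assume "A = 0"
    then have "vn \<bullet> ((\<chi> i j. fund F i j x0 y) *v vn) = 0" using vMv[OF xy, of vn] qn by simp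
    then show False using finsler[OF xy vn0] by simp
  next
    assume "A = 1"
    then have "vm \<bullet> ((\<chi> i j. fund F i j x0 y) *v vm) = 0" using vMv[OF xy, of vm] pm by simp
    then show False using finsler[OF xy vm0] by simp
  qed
qed

end

definition D3 :: "(real \<Rightarrow> real) \<Rightarrow> real \<Rightarrow> bool" where
  "D3 f d \<longleftrightarrow> (\<exists>f1 f2. eventually (\<lambda>t. (f has_real_derivative f1 t) (at t)) (nhds 0) \<and>
      eventually (\<lambda>t. (f1 has_real_derivative f2 t) (at t)) (nhds 0) \<and> (f2 has_real_derivative d) (at 0))"

lemma ev_deriv_cong:
  assumes "eventually (\<lambda>t. f t = g t) (nhds (x::real))"
  shows "eventually (\<lambda>t. deriv f t = deriv g t) (nhds x)"
proof -
  have "eventually (\<lambda>t. eventually (\<lambda>s. f s = g s) (nhds t)) (nhds x)"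
    using assms eventually_eventually by blast
  then show ?thesis
    by (rule eventually_mono) (rule deriv_cong_ev, auto)
qed

lemma D3_deriv:
  assumes "D3 f d" shows "deriv (deriv (deriv f)) 0 = d"
proof -
  obtain f1 f2 where h1: "eventually (\<lambda>t. (f has_real_derivative f1 t) (at t)) (nhds 0)"
    and h2: "eventually (\<lambda>t. (f1 has_real_derivative f2 t) (at t)) (nhds 0)"
    and h3: "(f2 has_real_derivative d) (at 0)"
    using assms unfolding D3_def by blast
  have e1: "eventually (\<lambda>t. deriv f t = f1 t) (nhds 0)"
    using h1 by (rule eventually_mono) (rule DERIV_imp_deriv)
  have e2: "eventually (\<lambda>t. deriv (deriv f) t = deriv f1 t) (nhds 0)"
    by (rule ev_deriv_cong[OF e1])
  have e3: "eventually (\<lambda>t. deriv f1 t = f2 t) (nhds 0)"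
    using h2 by (rule eventually_mono) (rule DERIV_imp_deriv)
  have e4: "eventually (\<lambda>t. deriv (deriv f) t = f2 t) (nhds 0)"
    using e2 e3 by eventually_elim simp
  have "deriv (deriv (deriv f)) 0 = deriv f2 0"
    by (rule deriv_cong_ev[OF e4 refl])
  also have "\<dots> = d" using h3 by (rule DERIV_imp_deriv)
  finally show ?thesis .
qed

lemma D3_lin:
  assumes "D3 f d" "D3 g e"
  shows "D3 (\<lambda>t. c * f t + k * g t) (c * d + k * e)"
proof -
  obtain f1 f2 where h1: "eventually (\<lambda>t. (f has_real_derivative f1 t) (at t)) (nhds 0)"
    and h2: "eventually (\<lambda>t. (f1 has_real_derivative f2 t) (at t)) (nhds 0)"
    and h3: "(f2 has_real_derivative d) (at 0)"
    using assms(1) unfolding D3_def by blast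
  obtain g1 g2 where k1: "eventually (\<lambda>t. (g has_real_derivative g1 t) (at t)) (nhds 0)"
    and k2: "eventually (\<lambda>t. (g1 has_real_derivative g2 t) (at t)) (nhds 0)"
    and k3: "(g2 has_real_derivative e) (at 0)"
    using assms(2) unfolding D3_def by blast
  have "eventually (\<lambda>t. ((\<lambda>t. c * f t + k * g t) has_real_derivative (\<lambda>t. c * f1 t + k * g1 t) t) (at t)) (nhds 0)"
    using h1 k1 by eventually_elim (auto intro!: derivative_eq_intros)
  moreover have "eventually (\<lambda>t. ((\<lambda>t. c * f1 t + k * g1 t) has_real_derivative (\<lambda>t. c * f2 t + k * g2 t) t) (at t)) (nhds 0)"
    using h2 k2 by eventually_elim (auto intro!: derivative_eq_intros)
  moreover have "((\<lambda>t. c * f2 t + k * g2 t) has_real_derivative (c * d + k * e)) (at 0)"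
    using h3 k3 by (auto intro!: derivative_eq_intros)
  ultimately show ?thesis unfolding D3_def
    by (intro exI[of _ "\<lambda>t. c * f1 t + k * g1 t"] exI[of _ "\<lambda>t. c * f2 t + k * g2 t"]) auto
qed

lemma D3_cong:
  assumes "eventually (\<lambda>t. f t = g t) (nhds 0)" "D3 f d"
  shows "D3 g d"
proof -
  obtain f1 f2 where h1: "eventually (\<lambda>t. (f has_real_derivative f1 t) (at t)) (nhds 0)"
    and h2: "eventually (\<lambda>t. (f1 has_real_derivative f2 t) (at t)) (nhds 0)"
    and h3: "(f2 has_real_derivative d) (at 0)"
    using assms(2) unfolding D3_def by blast
  have ee: "eventually (\<lambda>t. eventually (\<lambda>s. f s = g s) (nhds t)) (nhds 0)"
    using assms(1) eventually_eventually by blast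
  have "eventually (\<lambda>t. (g has_real_derivative f1 t) (at t)) (nhds 0)"
    using h1 ee by eventually_elim (use DERIV_cong_ev in blast)
  then show ?thesis unfolding D3_def using h2 h3 by blast
qed

lemma D3_poly: "D3 (\<lambda>t. al + be * t + ga * t^2) 0"
proof -
  have "\<And>t. ((\<lambda>t. al + be * t + ga * t^2) has_real_derivative (be + 2 * ga * t)) (at t)"
    by (auto intro!: derivative_eq_intros)
  moreover have "\<And>t. ((\<lambda>t. be + 2 * ga * t) has_real_derivative (2 * ga)) (at t)"
    by (auto intro!: derivative_eq_intros)
  moreover have "((\<lambda>t. 2 * ga) has_real_derivative 0) (at 0)"
    by (auto intro!: derivative_eq_intros)
  ultimately show ?thesis unfolding D3_def
    by (intro exI[of _ "\<lambda>t. be + 2 * ga * t"] exI[of _ "\<lambda>t. 2 * ga"]) auto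
qed

lemma ev_pos_line:
  assumes "P > (0::real)"
  shows "eventually (\<lambda>t. P + t * p > 0) (nhds 0)"
proof -
  have "open {t::real. 0 < P + t * p}"
    by (rule open_Collect_less) (auto intro!: continuous_intros)
  then show ?thesis using eventually_nhds_in_open[of "{t::real. 0 < P + t * p}" 0] assms by simp
qed

lemma g1:
  assumes "a t > 0" "b t > 0" "(a has_real_derivative p) (at t)" "(b has_real_derivative q) (at t)"
  shows "((\<lambda>s. (a s)^2 * (ln (a s) - ln (b s))) has_real_derivative
     (2*p*(a t)*(ln(a t) - ln(b t)) + p*(a t) - q*(a t)^2/(b t))) (at t)"
  using assms
  by (auto intro!: derivative_eq_intros simp: field_simps power2_eq_square)
lemma g2:
  assumes "a t > 0" "b t > 0" "(a has_real_derivative p) (at t)" "(b has_real_derivative q) (at t)"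
  shows "((\<lambda>s. 2*p*(a s)*(ln(a s) - ln(b s)) + p*(a s) - q*(a s)^2/(b s)) has_real_derivative
     (2*p^2*(ln(a t) - ln(b t)) + 3*p^2 - 4*p*q*(a t)/(b t) + q^2*(a t)^2/(b t)^2)) (at t)"
  using assms
  by (auto intro!: derivative_eq_intros simp: field_simps power2_eq_square)
lemma g3:
  assumes "a t > 0" "b t > 0" "(a has_real_derivative p) (at t)" "(b has_real_derivative q) (at t)"
  shows "((\<lambda>s. 2*p^2*(ln(a s) - ln(b s)) + 3*p^2 - 4*p*q*(a s)/(b s) + q^2*(a s)^2/(b s)^2) has_real_derivative
     (2 * (a t)^2 * (p/(a t) - q/(b t))^3)) (at t)"
  using assms
  by (auto intro!: derivative_eq_intros simp: field_simps power2_eq_square power3_eq_cube)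
lemma D3_log:
  assumes P: "P > 0" and Q: "Q > 0"
  shows "D3 (\<lambda>t. (P + t * p)^2 * (ln (P + t * p) - ln (Q + t * q))) (2 * P^2 * (p/P - q/Q)^3)"
proof -
  define a where "a = (\<lambda>t::real. P + t * p)"
  define b where "b = (\<lambda>t::real. Q + t * q)"
  have da: "(a has_real_derivative p) (at t)" for t unfolding a_def by (auto intro!: derivative_eq_intros)
  have db: "(b has_real_derivative q) (at t)" for t unfolding b_def by (auto intro!: derivative_eq_intros)
  have ev: "eventually (\<lambda>t. a t > 0 \<and> b t > 0) (nhds 0)"
    using ev_pos_line[OF P, of p] ev_pos_line[OF Q, of q] unfolding a_def b_def by eventually_elim simp
  have "eventually (\<lambda>t. ((\<lambda>s. (a s)^2 * (ln (a s) - ln (b s))) has_real_derivative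
     (\<lambda>t. 2*p*(a t)*(ln(a t) - ln(b t)) + p*(a t) - q*(a t)^2/(b t)) t) (at t)) (nhds 0)"
    using ev by eventually_elim (use g1 da db in auto)
  moreover have "eventually (\<lambda>t. ((\<lambda>s. 2*p*(a s)*(ln(a s) - ln(b s)) + p*(a s) - q*(a s)^2/(b s)) has_real_derivative
     (\<lambda>t. 2*p^2*(ln(a t) - ln(b t)) + 3*p^2 - 4*p*q*(a t)/(b t) + q^2*(a t)^2/(b t)^2) t) (at t)) (nhds 0)"
    using ev by eventually_elim (use g2 da db in auto)
  moreover have "((\<lambda>s. 2*p^2*(ln(a s) - ln(b s)) + 3*p^2 - 4*p*q*(a s)/(b s) + q^2*(a s)^2/(b s)^2) has_real_derivative
     (2 * (a 0)^2 * (p/(a 0) - q/(b 0))^3)) (at 0)"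
    by (rule g3) (use da db P Q in \<open>auto simp: a_def b_def\<close>)
  ultimately have "D3 (\<lambda>s. (a s)^2 * (ln (a s) - ln (b s))) (2 * (a 0)^2 * (p/(a 0) - q/(b 0))^3)"
    unfolding D3_def
    by (intro exI[of _ "\<lambda>t. 2*p*(a t)*(ln(a t) - ln(b t)) + p*(a t) - q*(a t)^2/(b t)"]
        exI[of _ "\<lambda>t. 2*p^2*(ln(a t) - ln(b t)) + 3*p^2 - 4*p*q*(a t)/(b t) + q^2*(a t)^2/(b t)^2"]) auto
  then show ?thesis by (simp add: a_def b_def)
qed

lemma deriv_shift0: "deriv g s = deriv (\<lambda>t. g (t + s)) (0::real)"
  unfolding deriv_def using DERIV_shift[of g _ 0 s] by simp

lemma dY_line:
  assumes "\<And>s. G x (y + s *\<^sub>R axis i 1) = g s"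
  shows "dY i G x (y + s *\<^sub>R axis i 1) = deriv g s"
proof -
  have "(\<lambda>t. G x (y + s *\<^sub>R axis i 1 + t *\<^sub>R axis i 1)) = (\<lambda>t. g (t + s))"
  proof
    fix t
    have eq: "y + s *\<^sub>R axis i 1 + t *\<^sub>R axis i 1 = y + (t + s) *\<^sub>R axis i (1::real)"
      by (simp add: scaleR_add_left algebra_simps)
    have "G x (y + s *\<^sub>R axis i 1 + t *\<^sub>R axis i 1) = G x (y + (t + s) *\<^sub>R axis i 1)"
      by (simp only: eq)
    also have "\<dots> = g (t + s)" by (rule assms)
    finally show "G x (y + s *\<^sub>R axis i 1 + t *\<^sub>R axis i 1) = g (t + s)" .
  qed
  then show ?thesis unfolding dY_def deriv_shift0[of g s] by simp
qed

lemma diag3: "dY i (dY i (dY i G)) x y = deriv (deriv (deriv (\<lambda>t. G x (y + t *\<^sub>R axis i 1)))) 0"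
proof -
  define g where "g = (\<lambda>t. G x (y + t *\<^sub>R axis i 1))"
  have 1: "dY i G x (y + s *\<^sub>R axis i 1) = deriv g s" for s
    by (rule dY_line) (simp add: g_def)
  have 2: "dY i (dY i G) x (y + s *\<^sub>R axis i 1) = deriv (deriv g) s" for s
    by (rule dY_line) (rule 1)
  have "dY i (dY i (dY i G)) x (y + 0 *\<^sub>R axis i 1) = deriv (deriv (deriv g)) 0"
    by (rule dY_line) (rule 2)
  then show ?thesis by (simp add: g_def)
qed

definition Qp :: "real \<Rightarrow> real \<Rightarrow> real \<Rightarrow> real \<Rightarrow> real \<Rightarrow> real \<Rightarrow> real^2 \<Rightarrow> real" where
  "Qp c0 c1 c2 c11 c12 c22 y = c0 + c1 * y$1 + c2 * y$2 + c11 * y$1 * y$1 + c12 * y$1 * y$2 + c22 * y$2 * y$2"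

definition isquad :: "(real^2 \<Rightarrow> real) \<Rightarrow> bool" where
  "isquad q \<longleftrightarrow> (\<exists>c0 c1 c2 c11 c12 c22. \<forall>y. q y = Qp c0 c1 c2 c11 c12 c22 y)"

definition islin :: "(real^2 \<Rightarrow> real) \<Rightarrow> bool" where
  "islin l \<longleftrightarrow> (\<exists>p q. \<forall>y. l y = p * y$1 + q * y$2)"

lemma islin_inner: "islin (\<lambda>y. u \<bullet> y)"
  unfolding islin_def inner2 by auto

lemma isquad_prod: "islin l \<Longrightarrow> islin m \<Longrightarrow> isquad (\<lambda>y. l y * m y)"
  unfolding islin_def isquad_def Qp_def
  by (elim exE, rename_tac p q p' q',
      rule_tac x=0 in exI, rule_tac x=0 in exI, rule_tac x=0 in exI,
      rule_tac x="p*p'" in exI, rule_tac x="p*q'+q*p'" in exI, rule_tac x="q*q'" in exI)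
     (simp add: algebra_simps)

lemma isquad_add: "isquad f \<Longrightarrow> isquad g \<Longrightarrow> isquad (\<lambda>y. f y + g y)"
  unfolding isquad_def Qp_def
  by (elim exE, rename_tac a0 a1 a2 a3 a4 a5 b0 b1 b2 b3 b4 b5,
      rule_tac x="a0+b0" in exI, rule_tac x="a1+b1" in exI, rule_tac x="a2+b2" in exI,
      rule_tac x="a3+b3" in exI, rule_tac x="a4+b4" in exI, rule_tac x="a5+b5" in exI)
     (simp add: algebra_simps)

lemma isquad_cmult: "isquad f \<Longrightarrow> isquad (\<lambda>y. c * f y)"
  unfolding isquad_def Qp_def
  by (elim exE, rename_tac a0 a1 a2 a3 a4 a5,
      rule_tac x="c*a0" in exI, rule_tac x="c*a1" in exI, rule_tac x="c*a2" in exI,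
      rule_tac x="c*a3" in exI, rule_tac x="c*a4" in exI, rule_tac x="c*a5" in exI)
     (simp add: algebra_simps)

lemma isquad_diff: "isquad f \<Longrightarrow> isquad g \<Longrightarrow> isquad (\<lambda>y. f y - g y)"
  using isquad_add[of f "\<lambda>y. (-1) * g y"] isquad_cmult[of g "-1"] by simp

lemma isquad_div: "isquad f \<Longrightarrow> isquad (\<lambda>y. f y / c)"
  using isquad_cmult[of f "1/c"] by simp

lemma axis_comp: "(axis k (1::real) :: real^2) $ m = (if m = k then 1 else 0)"
  by (simp add: axis_def)

lemma dY_Qp:
  "dY k (\<lambda>x y. Qp c0 c1 c2 c11 c12 c22 y) =
   (\<lambda>x y. Qp (c1 * axis k 1 $ 1 + c2 * axis k 1 $ 2)
              (2 * c11 * axis k 1 $ 1 + c12 * axis k 1 $ 2)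
              (c12 * axis k 1 $ 1 + 2 * c22 * axis k 1 $ 2) 0 0 0 y)"
proof (intro ext)
  fix x y :: "real^2"
  show "dY k (\<lambda>x y. Qp c0 c1 c2 c11 c12 c22 y) x y = Qp (c1 * axis k 1 $ 1 + c2 * axis k 1 $ 2)
              (2 * c11 * axis k 1 $ 1 + c12 * axis k 1 $ 2)
              (c12 * axis k 1 $ 1 + 2 * c22 * axis k 1 $ 2) 0 0 0 y"
    by (rule dY_eq) (auto intro!: derivative_eq_intros simp: Qp_def algebra_simps)
qed

lemma berw_Qp: "dY i (dY j (dY k (\<lambda>x y. Qp c0 c1 c2 c11 c12 c22 y))) x y = 0"
  unfolding dY_Qp by (simp add: Qp_def)

lemma D3_quad:
  assumes "isquad q"
  shows "D3 (\<lambda>t. q (y + t *\<^sub>R e)) 0"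
proof -
  obtain c0 c1 c2 c11 c12 c22 where q: "\<And>y. q y = Qp c0 c1 c2 c11 c12 c22 y"
    using assms unfolding isquad_def by blast
  define al where "al = Qp c0 c1 c2 c11 c12 c22 y"
  define be where "be = c1 * e$1 + c2 * e$2 + 2 * c11 * y$1 * e$1 + c12 * (y$1 * e$2 + e$1 * y$2) + 2 * c22 * y$2 * e$2"
  define ga where "ga = c11 * e$1 * e$1 + c12 * e$1 * e$2 + c22 * e$2 * e$2"
  have "\<And>t. al + be * t + ga * t^2 = q (y + t *\<^sub>R e)"
    unfolding q al_def be_def ga_def Qp_def by (simp add: algebra_simps power2_eq_square)
  then show ?thesis using D3_poly[of al be ga] by simp
qed

lemma islin_c1: "islin (\<lambda>y. y$1)" unfolding islin_def by (rule exI[of _ 1], rule exI[of _ 0]) simp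
lemma islin_c2: "islin (\<lambda>y. y$2)" unfolding islin_def by (rule exI[of _ 0], rule exI[of _ 1]) simp
lemma islin_cmult: "islin f \<Longrightarrow> islin (\<lambda>y. c * f y)"
  unfolding islin_def by (elim exE, rename_tac p q, rule_tac x="c*p" in exI, rule_tac x="c*q" in exI) (simp add: algebra_simps)
lemma islin_rmult: "islin f \<Longrightarrow> islin (\<lambda>y. f y * c)"
  using islin_cmult[of f c] by (simp add: mult.commute)
lemma islin_add: "islin f \<Longrightarrow> islin g \<Longrightarrow> islin (\<lambda>y. f y + g y)"
  unfolding islin_def by (elim exE, rename_tac p q p' q', rule_tac x="p+p'" in exI, rule_tac x="q+q'" in exI) (simp add: algebra_simps)
lemma isquad_rmult: "isquad f \<Longrightarrow> isquad (\<lambda>y. f y * c)"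
  using isquad_cmult[of f c] by (simp add: mult.commute)
lemma isquad_sq: "islin f \<Longrightarrow> isquad (\<lambda>y. (f y)^2)"
  using isquad_prod[of f f] by (simp add: power2_eq_square)

lemmas quad_intros = isquad_add isquad_diff isquad_div isquad_cmult isquad_sq isquad_rmult isquad_prod
  islin_inner islin_c1 islin_c2 islin_cmult islin_add islin_rmult

lemma dY_local_x:
  assumes "open N" "(x,y) \<in> N" "\<And>y'. (x,y') \<in> N \<Longrightarrow> H x y' = K x y'"
  shows "dY k H x y = dY k K x y"
  unfolding dY_def
  by (rule deriv_cong_ev[OF eventually_mono[OF ev_line_in(1)[OF assms(1,2), of "axis k 1"]]]) (auto simp: assms(3))

context core begin

definition "PPq y = Bil1 y y/2 + (mu \<bullet> y)^2*(Gf e1/2+(1-A)*tau2)/(2*A) + tau1*(mu \<bullet> y)*(nu \<bullet> y)/2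
   - (mu \<bullet> y)*((mu \<bullet> y)*Af e1+(nu \<bullet> y)*Af e2)/(2*A)"
definition "QQq y = Bil2 y y/2 - tau2*(mu \<bullet> y)*(nu \<bullet> y)/2 - (A*tau1-Gf e2/2)*(nu \<bullet> y)^2/(2*(1-A))
   + (nu \<bullet> y)*((mu \<bullet> y)*Af e1+(nu \<bullet> y)*Af e2)/(2*(1-A))"

lemma PP_split: "PP y = PPq y + Af e1/(2*A) * ((mu \<bullet> y)^2 * LL y)"
  unfolding PP_def PPq_def by (simp add: algebra_simps)
lemma QQ_split: "QQ y = QQq y + Af e2/(2*(1-A)) * ((nu \<bullet> y)^2 * LL y)"
  unfolding QQ_def QQq_def by (simp add: algebra_simps)

lemma quad_part: "isquad (\<lambda>y. PPq y * e1$h + QQq y * e2$h)"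
  unfolding PPq_def QQq_def Bil1_def Bil2_def
  by (intro quad_intros)

lemma dYF: "(x,y) \<in> N \<Longrightarrow> dY l F x y = F x y * H l x y / 2"
proof -
  assume xy: "(x,y) \<in> N"
  have "dY l F x y = dY l (\<lambda>x y. exp (Lam g a t1 t2 x y / 2)) x y"
    by (rule dY_local[OF N_open xy]) (simp add: N_F)
  also have "\<dots> = exp (Lam g a t1 t2 x y / 2) * H l x y / 2"
    by (rule dY_eq) (use N_pos[OF xy] in \<open>auto intro!: derivative_eq_intros simp: Lam_def inner_axis_add hh_def field_simps\<close>)
  finally show ?thesis using N_F[OF xy] by simp
qed

lemma B_diag:
  assumes nd: "dtm \<noteq> 0" "A \<noteq> 0" "A \<noteq> 1" and xy: "(x0,y) \<in> N"
  shows "dY i (dY i (dY i (spray F h))) x0 y =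
    e1$h * (Af e1/(2*A) * (2 * (mu \<bullet> y)^2 * (mu$i/(mu \<bullet> y) - nu$i/(nu \<bullet> y))^3))
  + e2$h * (- (Af e2/(2*(1-A))) * (2 * (nu \<bullet> y)^2 * (nu$i/(nu \<bullet> y) - mu$i/(mu \<bullet> y))^3))"
proof -
  define e where "e = (axis i 1 :: real^2)"
  define X where "X = mu \<bullet> y"
  define Y where "Y = nu \<bullet> y"
  define m where "m = mu$i"
  define n where "n = nu$i"
  have X: "X > 0" and Y: "Y > 0" using N_pos[OF xy] by (auto simp: X_def Y_def)
  define q where "q = (\<lambda>z. PPq z * e1$h + QQq z * e2$h)"
  define k1 where "k1 = e1$h * (Af e1/(2*A))"
  define k2 where "k2 = - (e2$h * (Af e2/(2*(1-A))))"
  have D: "D3 (\<lambda>t. 1 * q (y + t *\<^sub>R e) + 1 * (k1 * ((X + t * m)^2 * (ln (X + t * m) - ln (Y + t * n)))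
                   + k2 * ((Y + t * n)^2 * (ln (Y + t * n) - ln (X + t * m)))))
          (1 * 0 + 1 * (k1 * (2 * X^2 * (m/X - n/Y)^3) + k2 * (2 * Y^2 * (n/Y - m/X)^3)))"
    by (intro D3_lin D3_quad[OF quad_part[of h, folded q_def]] D3_log X Y)
  have eq: "1 * q (y + t *\<^sub>R e) + 1 * (k1 * ((X + t * m)^2 * (ln (X + t * m) - ln (Y + t * n)))
                   + k2 * ((Y + t * n)^2 * (ln (Y + t * n) - ln (X + t * m))))
       = SS (y + t *\<^sub>R e) $ h" for t
    unfolding SS_def PP_split QQ_split q_def k1_def k2_def LL_def X_def Y_def m_def n_def e_def inner_axis_add
    by (simp add: algebra_simps)
  have ev: "eventually (\<lambda>t. SS (y + t *\<^sub>R e) $ h = spray F h x0 (y + t *\<^sub>R e)) (nhds 0)"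
    using ev_line_in(1)[OF N_open xy, of e] by eventually_elim (simp add: spray_SS[OF nd])
  have D': "D3 (\<lambda>t. spray F h x0 (y + t *\<^sub>R e))
          (1 * 0 + 1 * (k1 * (2 * X^2 * (m/X - n/Y)^3) + k2 * (2 * Y^2 * (n/Y - m/X)^3)))"
    by (rule D3_cong[OF ev], rule D3_cong[OF _ D]) (intro always_eventually allI eq)
  show ?thesis
    unfolding diag3 D3_deriv[OF D'[unfolded e_def]]
    by (simp add: k1_def k2_def X_def Y_def m_def n_def e_def algebra_simps)
qed

end

lemma s_raw:
  fixes X Y A m1 m2 n1 n2 e11 e12 :: real
  assumes "X \<noteq> 0" "Y \<noteq> 0"
  shows "e11*(2*A*m1/X + 2*(1-A)*n1/Y) + e12*(2*A*m2/X + 2*(1-A)*n2/Y) = 2*A*(m1*e11+m2*e12)/X + 2*(1-A)*(n1*e11+n2*e12)/Y"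
  using assms by (simp add: field_simps)

context core begin

lemma lands_formula:
  assumes nd: "dtm \<noteq> 0" "A \<noteq> 0" "A \<noteq> 1" and xy: "(x0,y) \<in> N"
  shows "landsberg F i i i x0 y = -(1/2) * (F x0 y)^2 * (mu$i/(mu \<bullet> y) - nu$i/(nu \<bullet> y))^3 * Af y"
proof -
  define X where "X = mu \<bullet> y"
  define Y where "Y = nu \<bullet> y"
  have X: "X \<noteq> 0" and Y: "Y \<noteq> 0" using N_pos[OF xy] by (auto simp: X_def Y_def)
  define r where "r = mu$i/X - nu$i/Y"
  have r': "nu$i/Y - mu$i/X = - r" by (simp add: r_def)
  define al where "al = Af e1/(2*A) * (2 * X^2 * r^3)"
  define be where "be = - (Af e2/(2*(1-A))) * (2 * Y^2 * (- r)^3)"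
  have B: "berwald F h i i i x0 y = e1$h * al + e2$h * be" for h
    unfolding berwald_def B_diag[OF nd xy] al_def be_def X_def[symmetric] Y_def[symmetric] r_def[symmetric] r' by simp
  have s1: "e1$1 * H 1 x0 y + e1$2 * H 2 x0 y = 2*A*(mu \<bullet> e1)/X + 2*(1-A)*(nu \<bullet> e1)/Y"
    unfolding hh_def X_def[symmetric] Y_def[symmetric] inner2[of mu e1] inner2[of nu e1]
    by (rule s_raw[OF X Y])
  have s2: "e2$1 * H 1 x0 y + e2$2 * H 2 x0 y = 2*A*(mu \<bullet> e2)/X + 2*(1-A)*(nu \<bullet> e2)/Y"
    unfolding hh_def X_def[symmetric] Y_def[symmetric] inner2[of mu e2] inner2[of nu e2]
    by (rule s_raw[OF X Y])
  have S: "(\<Sum>h\<in>UNIV. berwald F h i i i x0 y * dY h F x0 y)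
      = F x0 y / 2 * (al * (e1$1 * H 1 x0 y + e1$2 * H 2 x0 y) + be * (e2$1 * H 1 x0 y + e2$2 * H 2 x0 y))"
    unfolding sum_2 B dYF[OF xy] by (simp add: algebra_simps)
  have h1: "al * (2*A/X) = 2 * X * Af e1 * r^3"
    unfolding al_def using X nd(2) by (simp add: field_simps power2_eq_square)
  have b1: "1 - A \<noteq> 0" using nd(3) by simp
  have h2: "be * (2*(1-A)/Y) = 2 * Y * Af e2 * r^3"
  proof -
    have "be = Af e2/(2*(1-A)) * (2 * Y^2 * r^3)" unfolding be_def by simp
    then show ?thesis using Y b1 by (simp add: field_simps power2_eq_square)
  qed
  have Af: "Af y = X * Af e1 + Y * Af e2" unfolding X_def Y_def by (rule Af_frame[OF nd(1)])
  have "landsberg F i i i x0 y = -(1/2) * F x0 y * (F x0 y / 2 * (al * (2*A/X) + be * (2*(1-A)/Y)))"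
    unfolding landsberg_def S s1 s2 frame_inner[OF nd(1)] by simp
  also have "\<dots> = -(1/2) * (F x0 y)^2 * r^3 * Af y"
    unfolding h1 h2 Af by (simp add: algebra_simps power2_eq_square)
  finally show ?thesis by (simp add: r_def X_def Y_def)
qed

lemma Af_zero:
  assumes nd: "dtm \<noteq> 0" "A \<noteq> 0" "A \<noteq> 1" and xy: "(x0,y) \<in> N"
  shows "Af y = 0"
proof (rule ccontr)
  assume nz: "Af y \<noteq> 0"
  have Fp: "F x0 y \<noteq> 0" using N_F[OF xy] by simp
  have X: "mu \<bullet> y > 0" and Y: "nu \<bullet> y > 0" using N_pos[OF xy] by auto
  have r: "mu$i/(mu \<bullet> y) - nu$i/(nu \<bullet> y) = 0" for i
    using lands[OF xy, of i i i] lands_formula[OF nd xy, of i] nz Fp by simp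
  have m: "mu$i * (nu \<bullet> y) = nu$i * (mu \<bullet> y)" for i
    using r[of i] X Y by (simp add: field_simps)
  have "dtm * (nu \<bullet> y) = nu$2 * (mu$1 * (nu \<bullet> y)) - nu$1 * (mu$2 * (nu \<bullet> y))"
    by (simp add: dtm_def algebra_simps)
  also have "\<dots> = 0" unfolding m by (simp add: algebra_simps)
  finally show False using nd(1) Y by simp
qed

end

context core begin

lemma ak_zero:
  assumes nd: "dtm \<noteq> 0" "A \<noteq> 0" "A \<noteq> 1" and xy: "(x0,y0) \<in> N"
  shows "ak k = 0"
proof -
  have "eventually (\<lambda>s. (x0, y0 + s *\<^sub>R axis k 1) \<in> N) (nhds 0)"
    by (rule ev_line_in(1)[OF N_open xy])
  then obtain d where d: "d > 0" "\<And>s. dist s 0 < d \<Longrightarrow> (x0, y0 + s *\<^sub>R axis k 1) \<in> N"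
    unfolding eventually_nhds_metric by blast
  define s where "s = d/2"
  have s0: "s \<noteq> 0" using d(1) by (simp add: s_def)
  have "(x0, y0 + s *\<^sub>R axis k 1) \<in> N" using d by (intro d(2)) (simp add: s_def)
  then have z1: "Af (y0 + s *\<^sub>R axis k 1) = 0" by (rule Af_zero[OF nd])
  have z0: "Af y0 = 0" by (rule Af_zero[OF nd xy])
  have "Af (y0 + s *\<^sub>R axis k 1) = Af y0 + s * Af (axis k 1)"
    by (simp add: Af_def algebra_simps)
  then have "s * ak k = 0" using z0 z1 axis_facts(2) by simp
  then show ?thesis using s0 by simp
qed

lemma core_berwald:
  assumes xy: "(x0,y0) \<in> N"
  shows "berwald F h i j k x0 y0 = 0"
proof -
  have nd: "dtm \<noteq> 0" "A \<noteq> 0" "A \<noteq> 1" using nondeg[OF xy] by auto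
  have a0: "Af v = 0" for v using ak_zero[OF nd xy, of 1] ak_zero[OF nd xy, of 2] by (simp add: Af_def)
  obtain c0 c1 c2 c11 c12 c22 where q: "\<And>y. PPq y * e1$h + QQq y * e2$h = Qp c0 c1 c2 c11 c12 c22 y"
    using quad_part[of h] unfolding isquad_def by blast
  define K where "K = (\<lambda>x::real^2. \<lambda>y. Qp c0 c1 c2 c11 c12 c22 y)"
  have L1: "spray F h x0 y = K x0 y" if "(x0,y) \<in> N" for y
    unfolding spray_SS[OF nd that] SS_def PP_split QQ_split a0 K_def q[symmetric] by simp
  have L2: "dY k (spray F h) x0 y = dY k K x0 y" if "(x0,y) \<in> N" for y
    by (rule dY_local_x[OF N_open that]) (rule L1)
  have L3: "dY j (dY k (spray F h)) x0 y = dY j (dY k K) x0 y" if "(x0,y) \<in> N" for y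
    by (rule dY_local_x[OF N_open that]) (rule L2)
  have "berwald F h i j k x0 y0 = dY i (dY j (dY k K)) x0 y0"
    unfolding berwald_def by (rule dY_local_x[OF N_open xy]) (rule L3)
  also have "\<dots> = 0" unfolding K_def by (rule berw_Qp)
  finally show ?thesis .
qed

end

definition gen_ok :: "real \<Rightarrow> real \<Rightarrow> real \<Rightarrow> real \<Rightarrow> bool" where
  "gen_ok A B C u \<longleftrightarrow> A * u\<^sup>2 + B * u + C > 0 \<and> B\<^sup>2 - 4 * A * C > 0 \<and>
     \<bar>(2 * A * u + B) / sqrt (B\<^sup>2 - 4 * A * C)\<bar> < 1"

definition gen_f :: "real \<Rightarrow> real \<Rightarrow> real \<Rightarrow> real \<Rightarrow> real \<Rightarrow> real" where
  "gen_f A B C K u = sqrt (A * u\<^sup>2 + B * u + C) * exp (K * artanh ((2 * A * u + B) / sqrt (B\<^sup>2 - 4 * A * C)))"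

lemma gen_A_neg:
  assumes "gen_ok A B C u"
  shows "A < 0"
proof -
  define s where "s = sqrt (B\<^sup>2 - 4 * A * C)"
  define z where "z = (2 * A * u + B) / s"
  have d: "B\<^sup>2 - 4 * A * C > 0" and Q: "A * u\<^sup>2 + B * u + C > 0" and z: "\<bar>z\<bar> < 1"
    using assms by (auto simp: gen_ok_def z_def s_def)
  have s: "s > 0" using d by (simp add: s_def)
  have ss: "s * s = B\<^sup>2 - 4 * A * C" using d by (simp add: s_def)
  have zs: "z * s = 2 * A * u + B" using s by (simp add: z_def)
  have "s * s * (1 - z * z) = s * s - (z * s) * (z * s)" by (simp add: algebra_simps)
  also have "\<dots> = -4 * A * (A * u\<^sup>2 + B * u + C)" unfolding zs ss by (simp add: algebra_simps power2_eq_square)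
  finally have e: "s * s * (1 - z * z) = -4 * A * (A * u\<^sup>2 + B * u + C)" .
  have "z\<^sup>2 < 1" using z by (simp add: abs_square_less_1)
  then have "s * s * (1 - z * z) > 0" using s by (simp add: power2_eq_square)
  then have "-4 * A * (A * u\<^sup>2 + B * u + C) > 0" using e by simp
  then have "A * (A * u\<^sup>2 + B * u + C) < 0" by simp
  then show ?thesis using Q by (simp add: mult_less_0_iff)
qed

lemma gen_pw:
  fixes A B C K y1 y2 \<sigma> :: real
  assumes ok: "gen_ok A B C (y2/y1)" and sg: "\<sigma> * y1 > 0" and sig: "\<sigma> = 1 \<or> \<sigma> = -1"
  defines "s \<equiv> sqrt (B\<^sup>2 - 4 * A * C)"
  defines "X \<equiv> \<sigma> * ((s + B) / s * y1 + 2 * A / s * y2)"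
    and "Y \<equiv> \<sigma> * ((s - B) / s * y1 + (- 2 * A / s) * y2)"
  shows "X > 0 \<and> Y > 0 \<and> \<bar>y1\<bar> * gen_f A B C K (y2/y1) =
     exp ((2 * ln s - ln (-4 * A) + 2 * ((1 + K) / 2) * ln X + 2 * (1 - (1 + K) / 2) * ln Y) / 2)"
proof -
  define u where "u = y2 / y1"
  define z where "z = (2 * A * u + B) / s"
  define Q where "Q = A * u\<^sup>2 + B * u + C"
  have d: "B\<^sup>2 - 4 * A * C > 0" and Q: "Q > 0" and z: "\<bar>z\<bar> < 1"
    using ok by (auto simp: gen_ok_def z_def s_def u_def Q_def)
  have An: "A < 0" using gen_A_neg[OF ok] .
  have s: "s > 0" using d by (simp add: s_def)
  have ss: "s * s = B\<^sup>2 - 4 * A * C" using d by (simp add: s_def)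
  have y1: "y1 \<noteq> 0" using sg by auto
  have ay: "\<bar>y1\<bar> = \<sigma> * y1" using sig sg by auto
  have zp: "1 + z > 0" "1 - z > 0" using z by auto
  have hX: "X = (\<sigma> * y1) * (1 + z)"
    unfolding X_def z_def u_def using s y1 by (simp add: field_simps)
  have hY: "Y = (\<sigma> * y1) * (1 - z)"
    unfolding Y_def z_def u_def using s y1 by (simp add: field_simps)
  have Xp: "X > 0" and Yp: "Y > 0" unfolding hX hY using sg zp by simp_all
  have zs: "z * s = 2 * A * u + B" using s by (simp add: z_def)
  have "s * s * (1 - z * z) = s * s - (z * s) * (z * s)" by (simp add: algebra_simps)
  also have "\<dots> = -4 * A * Q" unfolding zs ss Q_def by (simp add: algebra_simps power2_eq_square)
  finally have e: "s * s * ((1 + z) * (1 - z)) = -4 * A * Q" by (simp add: algebra_simps)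
  have hQ: "Q = s * s * ((1 + z) * (1 - z)) / (-4 * A)" using e An by (simp add: field_simps)
  have l1: "ln Q = ln (s * s * ((1 + z) * (1 - z))) - ln (-4 * A)"
    unfolding hQ by (subst ln_div) (use s zp An in auto)
  have l2: "ln (s * s * ((1 + z) * (1 - z))) = 2 * ln s + ln (1 + z) + ln (1 - z)"
    using s zp by (simp add: ln_mult)
  have lnQ: "ln Q = 2 * ln s + ln (1 + z) + ln (1 - z) - ln (-4 * A)"
    using l1 l2 by simp
  have sq: "sqrt Q = exp (ln Q / 2)"
    using Q by (simp add: ln_sqrt[symmetric])
  have art: "artanh z = (ln (1 + z) - ln (1 - z)) / 2"
    unfolding artanh_def using zp by (simp add: ln_div)
  have ly: "\<bar>y1\<bar> = exp (ln (\<sigma> * y1))" using sg ay by simp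
  have sn: "\<sigma> \<noteq> 0" using sg by auto
  have lX: "ln X = ln (\<sigma> * y1) + ln (1 + z)" unfolding hX
    by (subst ln_mult) (use sg zp y1 sn in auto)
  have lY: "ln Y = ln (\<sigma> * y1) + ln (1 - z)" unfolding hY
    by (subst ln_mult) (use sg zp y1 sn in auto)
  have "\<bar>y1\<bar> * gen_f A B C K (y2/y1) = exp (ln (\<sigma> * y1)) * exp (ln Q / 2) * exp (K * ((ln (1 + z) - ln (1 - z)) / 2))"
    unfolding gen_f_def u_def[symmetric] s_def[symmetric] z_def[symmetric] Q_def[symmetric] sq art ly by simp
  also have "\<dots> = exp (ln (\<sigma> * y1) + ln Q / 2 + K * ((ln (1 + z) - ln (1 - z)) / 2))"
    by (simp add: exp_add)
  also have "\<dots> = exp ((2 * ln s - ln (-4 * A) + 2 * ((1 + K) / 2) * ln X + 2 * (1 - (1 + K) / 2) * ln Y) / 2)"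
    unfolding lnQ lX lY by (simp add: algebra_simps add_divide_distrib diff_divide_distrib)
  finally show ?thesis using Xp Yp by simp
qed

lemma DERIV_differentiable: "(f has_real_derivative D) (at x) \<Longrightarrow> f differentiable (at x)"
  using DERIV_deriv_iff_real_differentiable DERIV_imp_deriv by metis

lemma diff_sqrt:
  fixes f :: "'a::real_normed_vector \<Rightarrow> real"
  assumes "f differentiable (at x)" "f x > 0"
  shows "(\<lambda>x. sqrt (f x)) differentiable (at x)"
  by (rule differentiable_compose[where f=sqrt, OF _ assms(1)])
     (rule DERIV_differentiable, rule DERIV_real_sqrt, rule assms(2))

lemma diff_ln:
  fixes f :: "'a::real_normed_vector \<Rightarrow> real"
  assumes "f differentiable (at x)" "f x > 0"
  shows "(\<lambda>x. ln (f x)) differentiable (at x)"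
  by (rule differentiable_compose[where f=ln, OF _ assms(1)])
     (rule DERIV_differentiable, rule DERIV_ln, rule assms(2))

lemma line_diff:
  fixes c :: "real^2 \<Rightarrow> real"
  assumes "c differentiable (at x0)"
  shows "(\<lambda>t. c (x0 + t *\<^sub>R e)) differentiable (at 0)"
proof (rule differentiable_compose[where f=c])
  show "c differentiable (at (x0 + 0 *\<^sub>R e))" using assms by simp
  show "(\<lambda>t::real. x0 + t *\<^sub>R e) differentiable (at 0)"
    by (intro differentiable_add differentiable_scaleR differentiable_const differentiable_ident)
qed

theorem gen_inst:
  fixes F :: tbfun and \<Omega> :: "((real^2) \<times> (real^2)) set" and Aq Bq Cq K :: "real^2 \<Rightarrow> real"
  assumes \<Omega>_open: "open \<Omega>"
    and reg: "\<forall>(x, y) \<in> \<Omega>. y $ 1 \<noteq> 0"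
    and diffs: "\<And>x y. (x,y) \<in> \<Omega> \<Longrightarrow> Aq differentiable (at x) \<and> Bq differentiable (at x)
                  \<and> Cq differentiable (at x) \<and> K differentiable (at x)"
    and form: "\<forall>(x, y) \<in> \<Omega>. gen_ok (Aq x) (Bq x) (Cq x) (y$2/y$1) \<and>
                  F x y = \<bar>y$1\<bar> * gen_f (Aq x) (Bq x) (Cq x) (K x) (y$2/y$1)"
    and finsler: "\<forall>(x, y) \<in> \<Omega>. \<forall>v::real^2. v \<noteq> 0 \<longrightarrow> v \<bullet> ((\<chi> i j. fund F i j x y) *v v) > 0"
    and landsbergian: "\<forall>(x, y) \<in> \<Omega>. \<forall>i j k. landsberg F i j k x y = 0"
  shows "\<forall>(x, y) \<in> \<Omega>. \<forall>h i j k. berwald F h i j k x y = 0"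
proof (intro ballI allI, clarify)
  fix x0 y0 h i j k
  assume xy0: "(x0, y0) \<in> \<Omega>"
  define \<sigma> where "\<sigma> = (if y0$1 > 0 then 1 else -1 :: real)"
  define N where "N = {p \<in> \<Omega>. \<sigma> * (snd p)$1 > 0}"
  define sf where "sf = (\<lambda>x. sqrt ((Bq x)\<^sup>2 - 4 * Aq x * Cq x))"
  define gf where "gf = (\<lambda>x. 2 * ln (sf x) - ln (-4 * Aq x))"
  define af where "af = (\<lambda>x. (1 + K x) / 2)"
  define th1 where "th1 = (\<lambda>x. \<chi> (m::2). if m = 1 then \<sigma> * ((sf x + Bq x) / sf x) else \<sigma> * (2 * Aq x / sf x))"
  define th2 where "th2 = (\<lambda>x. \<chi> (m::2). if m = 1 then \<sigma> * ((sf x - Bq x) / sf x) else \<sigma> * (- 2 * Aq x / sf x))"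
  have sig: "\<sigma> = 1 \<or> \<sigma> = -1" by (simp add: \<sigma>_def)
  have in1: "th1 x \<bullet> y = \<sigma> * ((sf x + Bq x) / sf x * y$1 + 2 * Aq x / sf x * y$2)" for x y
    by (simp add: inner2 th1_def algebra_simps)
  have in2: "th2 x \<bullet> y = \<sigma> * ((sf x - Bq x) / sf x * y$1 + (- 2 * Aq x / sf x) * y$2)" for x y
    by (simp add: inner2 th2_def algebra_simps)
  have xy0N: "(x0, y0) \<in> N"
    using xy0 reg by (auto simp: N_def \<sigma>_def)
  have ok0: "gen_ok (Aq x0) (Bq x0) (Cq x0) (y0$2/y0$1)" using form xy0 by auto
  have An: "Aq x0 < 0" by (rule gen_A_neg[OF ok0])
  have dp: "(Bq x0)\<^sup>2 - 4 * Aq x0 * Cq x0 > 0" using ok0 by (simp add: gen_ok_def)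
  have sp: "sf x0 > 0" using dp by (simp add: sf_def)
  have dA: "Aq differentiable (at x0)" and dB: "Bq differentiable (at x0)"
    and dC: "Cq differentiable (at x0)" and dK: "K differentiable (at x0)"
    using diffs[OF xy0] by auto
  have dsf: "sf differentiable (at x0)"
    unfolding sf_def by (rule diff_sqrt) (use dA dB dC dp in \<open>auto intro!: derivative_intros\<close>)
  have dgf: "gf differentiable (at x0)"
    unfolding gf_def
    by (intro derivative_intros diff_ln dsf sp) (use dA An in \<open>auto intro!: derivative_intros\<close>)
  have daf: "af differentiable (at x0)"
    unfolding af_def by (intro derivative_intros dK) simp
  have dth1: "(\<lambda>x. th1 x $ m) differentiable (at x0)" for m
  proof (cases "m = 1")
    case True
    then have "(\<lambda>x. th1 x $ m) = (\<lambda>x. \<sigma> * ((sf x + Bq x) / sf x))" by (simp add: th1_def)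
    then show ?thesis using dsf dB sp by (auto intro!: derivative_intros)
  next
    case False
    then have "(\<lambda>x. th1 x $ m) = (\<lambda>x. \<sigma> * (2 * Aq x / sf x))" by (simp add: th1_def)
    then show ?thesis using dsf dA sp by (auto intro!: derivative_intros)
  qed
  have dth2: "(\<lambda>x. th2 x $ m) differentiable (at x0)" for m
  proof (cases "m = 1")
    case True
    then have "(\<lambda>x. th2 x $ m) = (\<lambda>x. \<sigma> * ((sf x - Bq x) / sf x))" by (simp add: th2_def)
    then show ?thesis using dsf dB sp by (auto intro!: derivative_intros)
  next
    case False
    then have "(\<lambda>x. th2 x $ m) = (\<lambda>x. \<sigma> * (- 2 * Aq x / sf x))" by (simp add: th2_def)
    then show ?thesis using dsf dA sp by (auto intro!: derivative_intros)
  qed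
  have pw: "th1 x \<bullet> y > 0 \<and> th2 x \<bullet> y > 0 \<and> F x y = exp (Lam gf af th1 th2 x y / 2)"
    if "(x, y) \<in> N" for x y
  proof -
    have xy: "(x, y) \<in> \<Omega>" and sy: "\<sigma> * y$1 > 0" using that by (auto simp: N_def)
    have ok: "gen_ok (Aq x) (Bq x) (Cq x) (y$2/y$1)" and Fe: "F x y = \<bar>y$1\<bar> * gen_f (Aq x) (Bq x) (Cq x) (K x) (y$2/y$1)"
      using form xy by auto
    note g = gen_pw[OF ok sy sig, of "K x"]
    show ?thesis
      unfolding in1 in2 Fe Lam_def gf_def af_def sf_def using g by simp
  qed
  have oN: "open N"
  proof -
    have "N = \<Omega> \<inter> {p. 0 < \<sigma> * (snd p)$1}" by (auto simp: N_def)
    moreover have "open {p :: (real^2) \<times> (real^2). 0 < \<sigma> * (snd p)$1}"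
      by (rule open_Collect_less) (auto intro!: continuous_intros)
    ultimately show ?thesis using \<Omega>_open by auto
  qed
  have c: "core F gf af th1 th2 N x0"
  proof
    show "open N" by (rule oN)
    show "\<And>x y. (x, y) \<in> N \<Longrightarrow> 0 < th1 x \<bullet> y \<and> 0 < th2 x \<bullet> y" using pw by blast
    show "\<And>x y. (x, y) \<in> N \<Longrightarrow> F x y = exp (Lam gf af th1 th2 x y / 2)" using pw by blast
    show "\<And>k. (\<lambda>t. gf (x0 + t *\<^sub>R axis k 1)) differentiable (at 0)" by (rule line_diff[OF dgf])
    show "\<And>k. (\<lambda>t. af (x0 + t *\<^sub>R axis k 1)) differentiable (at 0)" by (rule line_diff[OF daf])
    show "\<And>k m. (\<lambda>t. th1 (x0 + t *\<^sub>R axis k 1) $ m) differentiable (at 0)"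
      by (rule line_diff[OF dth1])
    show "\<And>k m. (\<lambda>t. th2 (x0 + t *\<^sub>R axis k 1) $ m) differentiable (at 0)"
      by (rule line_diff[OF dth2])
    show "\<And>y v. (x0, y) \<in> N \<Longrightarrow> v \<noteq> 0 \<Longrightarrow> 0 < v \<bullet> ((\<chi> i j. fund F i j x0 y) *v v)"
      using finsler by (auto simp: N_def)
    show "\<And>y i j k. (x0, y) \<in> N \<Longrightarrow> landsberg F i j k x0 y = 0"
      using landsbergian by (auto simp: N_def)
  qed
  show "berwald F h i j k x0 y0 = 0"
    by (rule core.core_berwald[OF c xy0N])
qed

lemma smooth_diff: "smooth2_on U c \<Longrightarrow> open U \<Longrightarrow> x \<in> U \<Longrightarrow> c differentiable (at x)"
  unfolding smooth2_on_def using differentiable_on_eq_differentiable_at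
  by (metis iter_pd.simps(1))

lemma D1_eq: "D1 c1 c2 c3 = (c2 * c3 - 4 * c1 + 1)\<^sup>2 - 4 * c3 * c2"
  unfolding D1_def by (simp add: algebra_simps power2_eq_square)

lemma form1_gen_ok: "form1_ok c1 c2 c3 u = gen_ok c3 (c2 * c3 - 4 * c1 + 1) c2 u"
  unfolding form1_ok_def gen_ok_def D1_eq[symmetric] by (simp add: algebra_simps)

lemma form1_gen: "form1 c1 c2 c3 u = gen_f c3 (c2 * c3 - 4 * c1 + 1) c2 ((- c2 * c3 + 4 * c1 + 1) / sqrt (D1 c1 c2 c3)) u"
  unfolding form1_def gen_f_def D1_eq[symmetric] by (simp add: algebra_simps)

lemma form2_gen_ok: "form2_ok a b u = gen_ok a b 1 u"
  unfolding form2_ok_def gen_ok_def by simp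

lemma form2_gen: "form2 a b u = gen_f a b 1 (- (b / sqrt (b\<^sup>2 - 4 * a))) u"
  unfolding form2_def gen_f_def by simp

theorem corollary4p8:
  fixes F :: "real^2 \<Rightarrow> real^2 \<Rightarrow> real"
    and U :: "(real^2) set"
    and \<Omega> :: "((real^2) \<times> (real^2)) set"
  assumes U_open: "open U"
    and \<Omega>_open: "open \<Omega>"
    and \<Omega>_region: "\<forall>(x, y) \<in> \<Omega>. x \<in> U \<and> y $ 1 \<noteq> 0"
    and form:
      "(\<exists>c1 c2 c3. smooth2_on U c1 \<and> smooth2_on U c2 \<and> smooth2_on U c3 \<and>
          (\<forall>(x, y) \<in> \<Omega>. form1_ok (c1 x) (c2 x) (c3 x) (y $ 2 / y $ 1) \<and>
             F x y = \<bar>y $ 1\<bar> * form1 (c1 x) (c2 x) (c3 x) (y $ 2 / y $ 1)))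
       \<or> (\<exists>a b. smooth2_on U a \<and> smooth2_on U b \<and>
          (\<forall>(x, y) \<in> \<Omega>. form2_ok (a x) (b x) (y $ 2 / y $ 1) \<and>
             F x y = \<bar>y $ 1\<bar> * form2 (a x) (b x) (y $ 2 / y $ 1)))"
    and finsler:
      "\<forall>(x, y) \<in> \<Omega>. \<forall>v::real^2. v \<noteq> 0 \<longrightarrow>
          v \<bullet> ((\<chi> i j. fund F i j x y) *v v) > 0"
    and landsbergian: "\<forall>(x, y) \<in> \<Omega>. \<forall>i j k. landsberg F i j k x y = 0"
  shows "\<forall>(x, y) \<in> \<Omega>. \<forall>h i j k. berwald F h i j k x y = 0"
proof -
  have reg: "\<forall>(x, y) \<in> \<Omega>. y $ 1 \<noteq> 0" using \<Omega>_region by auto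
  have inU: "\<And>x y. (x, y) \<in> \<Omega> \<Longrightarrow> x \<in> U" using \<Omega>_region by auto
  from form show ?thesis
  proof
    assume "\<exists>c1 c2 c3. smooth2_on U c1 \<and> smooth2_on U c2 \<and> smooth2_on U c3 \<and>
          (\<forall>(x, y) \<in> \<Omega>. form1_ok (c1 x) (c2 x) (c3 x) (y $ 2 / y $ 1) \<and>
             F x y = \<bar>y $ 1\<bar> * form1 (c1 x) (c2 x) (c3 x) (y $ 2 / y $ 1))"
    then obtain c1 c2 c3 where s1: "smooth2_on U c1" and s2: "smooth2_on U c2" and s3: "smooth2_on U c3"
      and f: "\<forall>(x, y) \<in> \<Omega>. form1_ok (c1 x) (c2 x) (c3 x) (y $ 2 / y $ 1) \<and>
             F x y = \<bar>y $ 1\<bar> * form1 (c1 x) (c2 x) (c3 x) (y $ 2 / y $ 1)" by blast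
    show ?thesis
    proof (rule gen_inst[OF \<Omega>_open reg _ _ finsler landsbergian,
          where Aq=c3 and Bq="\<lambda>x. c2 x * c3 x - 4 * c1 x + 1" and Cq=c2
            and K="\<lambda>x. (- c2 x * c3 x + 4 * c1 x + 1) / sqrt (D1 (c1 x) (c2 x) (c3 x))"])
      fix x y assume xy: "(x, y) \<in> \<Omega>"
      have d1: "c1 differentiable (at x)" "c2 differentiable (at x)" "c3 differentiable (at x)"
        using smooth_diff[OF s1 U_open inU[OF xy]] smooth_diff[OF s2 U_open inU[OF xy]]
          smooth_diff[OF s3 U_open inU[OF xy]] by auto
      have Dp: "D1 (c1 x) (c2 x) (c3 x) > 0" using f xy by (auto simp: form1_ok_def)
      have dD: "(\<lambda>x. D1 (c1 x) (c2 x) (c3 x)) differentiable (at x)"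
        unfolding D1_def using d1 by (auto intro!: derivative_intros)
      have dsD: "(\<lambda>x. sqrt (D1 (c1 x) (c2 x) (c3 x))) differentiable (at x)"
        by (rule diff_sqrt[OF dD Dp])
      show "c3 differentiable (at x) \<and> (\<lambda>x. c2 x * c3 x - 4 * c1 x + 1) differentiable (at x) \<and>
            c2 differentiable (at x) \<and>
            (\<lambda>x. (- c2 x * c3 x + 4 * c1 x + 1) / sqrt (D1 (c1 x) (c2 x) (c3 x))) differentiable (at x)"
        using d1 dsD Dp by (auto intro!: derivative_intros)
    next
      show "\<forall>(x, y) \<in> \<Omega>. gen_ok (c3 x) (c2 x * c3 x - 4 * c1 x + 1) (c2 x) (y $ 2 / y $ 1) \<and>
             F x y = \<bar>y $ 1\<bar> * gen_f (c3 x) (c2 x * c3 x - 4 * c1 x + 1) (c2 x)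
               ((- c2 x * c3 x + 4 * c1 x + 1) / sqrt (D1 (c1 x) (c2 x) (c3 x))) (y $ 2 / y $ 1)"
        using f by (auto simp: form1_gen_ok form1_gen)
    qed
  next
    assume "\<exists>a b. smooth2_on U a \<and> smooth2_on U b \<and>
          (\<forall>(x, y) \<in> \<Omega>. form2_ok (a x) (b x) (y $ 2 / y $ 1) \<and>
             F x y = \<bar>y $ 1\<bar> * form2 (a x) (b x) (y $ 2 / y $ 1))"
    then obtain a b where sa: "smooth2_on U a" and sb: "smooth2_on U b"
      and f: "\<forall>(x, y) \<in> \<Omega>. form2_ok (a x) (b x) (y $ 2 / y $ 1) \<and>
             F x y = \<bar>y $ 1\<bar> * form2 (a x) (b x) (y $ 2 / y $ 1)" by blast
    show ?thesis
    proof (rule gen_inst[OF \<Omega>_open reg _ _ finsler landsbergian,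
          where Aq=a and Bq=b and Cq="\<lambda>x. 1"
            and K="\<lambda>x. - (b x / sqrt ((b x)\<^sup>2 - 4 * a x))"])
      fix x y assume xy: "(x, y) \<in> \<Omega>"
      have d1: "a differentiable (at x)" "b differentiable (at x)"
        using smooth_diff[OF sa U_open inU[OF xy]] smooth_diff[OF sb U_open inU[OF xy]] by auto
      have Dp: "(b x)\<^sup>2 - 4 * a x > 0" using f xy by (auto simp: form2_ok_def)
      have dD: "(\<lambda>x. (b x)\<^sup>2 - 4 * a x) differentiable (at x)"
        using d1 by (auto intro!: derivative_intros)
      have dsD: "(\<lambda>x. sqrt ((b x)\<^sup>2 - 4 * a x)) differentiable (at x)"
        by (rule diff_sqrt[OF dD Dp])
      show "a differentiable (at x) \<and> b differentiable (at x) \<and> (\<lambda>x. 1::real) differentiable (at x) \<and>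
            (\<lambda>x. - (b x / sqrt ((b x)\<^sup>2 - 4 * a x))) differentiable (at x)"
        using d1 dsD Dp by (auto intro!: derivative_intros)
    next
      show "\<forall>(x, y) \<in> \<Omega>. gen_ok (a x) (b x) 1 (y $ 2 / y $ 1) \<and>
             F x y = \<bar>y $ 1\<bar> * gen_f (a x) (b x) 1 (- (b x / sqrt ((b x)\<^sup>2 - 4 * a x))) (y $ 2 / y $ 1)"
        using f by (auto simp: form2_gen_ok form2_gen)
    qed
  qed
qed

end
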